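(* For every $x\in\mathfrak{sl}_q(2)=V_{2\pi}$, the operators $L_x$, $\iota_x$ and $\mathrm{d}_{\mathrm{Cl}_q}$ on $\mathrm{Cl}_q(\mathfrak{sl}_2)$ satisfy Cartan's magic formula \[ L_x=\iota_x\circ\mathrm{d}_{\mathrm{Cl}_q}+\mathrm{d}_{\mathrm{Cl}_q}\circ\iota_x . \] In particular, the cochain maps $L_x$ are homotopic to $0$ with homotopy $\iota_x$, so $L_x$ induces the zero action on the cohomology of $(\mathrm{Cl}_q(\mathfrak{sl}_2),\mathrm{d}_{\mathrm{Cl}_q})$.
   Context: Fix $q\in\mathbb{C}$ nonzero and not a root of unity. $U_q(\mathfrak{sl}_2)$ is the Hopf algebra generated by $E,F,K,K^{-1}$ with $KE=q^2EK$, $KF=q^{-2}FK$, $KK^{-1}=K^{-1}K=1$, $EF-FE=\frac{K-K^{-1}}{q-q^{-1}}$, coproduct $\Delta E=E\otimes K+1\otimes E$, $\Delta F=F\otimes 1+K^{-1}\otimes F$, $\Delta K^{\pm1}=K^{\pm1}\otimes K^{\pm1}$, antipode $S(E)=-EK^{-1}$, $S(F)=-KF$, $S(K^{\pm1})=K^{\mp1}$. $\mathfrak{sl}_q(2)\subset U_q(\mathfrak{sl}_2)$ is the span of $X=E$, $Z=q^{-2}EF-FE$, $Y=KF$, stable under the left adjoint action $\mathrm{ad}_xy=\sum x_{(1)}yS(x_{(2)})$; it is the 3-dimensional type 1 simple module $V_{2\pi}$, with basis written $v_2=X$, $v_0=Z$, $v_{-2}=Y$. The category of finite-dimensional type 1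 modules is braided via the universal $R$-matrix braiding $\sigma$; the normalised braiding is $\tilde\sigma_{V,W}=\sigma_{V,W}\circ(\sigma_{W,V}\circ\sigma_{V,W})^{-1/2}$. Fix a nonzero $c\in\mathbb{C}[q,q^{-1}]$. $\mathrm{Cl}_q(\mathfrak{sl}_2)$ is the superalgebra (generators odd) generated by $v_2,v_0,v_{-2}$ with relations $v_2v_2=0$, $v_{-2}v_{-2}=0$, $v_0v_2=-q^{-2}v_2v_0$, $v_{-2}v_0=-q^{-2}v_0v_{-2}$, $v_0v_0=\frac{1-q^4}{q^3}v_2v_{-2}+\frac{q^2+1}{q}c$, $v_{-2}v_2=-v_2v_{-2}+\frac{q^2+1}{q^2}c$ (equivalently $T(V_{2\pi})/\langle v\otimes w+\tilde\sigma(v\otimes w)-2\langle v,w\rangle\rangle$ with $\langle v_2,v_{-2}\rangle=c$, $\langle v_0,v_0\rangle=q^{-3}(1+q^2)c$, $\langle v_{-2},v_2\rangle=cq^{-2}$). It is a $U_q(\mathfrak{sl}_2)$-module algebra with action $\triangleright$ induced from $V_{2\pi}$. $[x,y]_{\tilde\sigma}:=(m-(-1)^{p(x)p(y)}m\circ\tilde\sigma)(x\otimes y)$. Operators: Lie derivative $L_x\omega=x\triangleright\omega$; contraction $\iota_x\omega=\frac12[x,\omega]_{\tilde\sigma}$ for $x\in V_{2\pi}$; differential $\mathrm{d}_{\mathrm{Cl}_q}\omega=[\gamma_q,\omega]_{\tilde\sigma}=\gamma_q\omega-(-1)^{p(\omega)}\omega\gamma_q$ where $\gamma_q=-\frac{1}{2c^2}(cv_0+v_2v_0v_{-2})$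 (an element whose square is a scalar). *)

theory Defs
  imports Complex_Main "HOL-Library.Function_Algebras"
begin

text \<open>
  All spaces are finite dimensional and are modelled as coefficient functions
  on a finite basis type: a vector of a space with basis type 'a is a function
  of type 'a => complex.  The parameters q and c of the paper are the complex
  numbers q and cc below.
\<close>

type_synonym 'a vec = "'a \<Rightarrow> complex"

definition bv :: "'a \<Rightarrow> 'a vec" where
  "bv i = (\<lambda>j. if j = i then 1 else 0)"

definition sc :: "complex \<Rightarrow> 'a vec \<Rightarrow> 'a vec" where
  "sc a v = (\<lambda>j. a * v j)"

definition linext :: "('a::finite \<Rightarrow> 'b vec) \<Rightarrow> 'a vec \<Rightarrow> 'b vec" where
  "linext f v = (\<lambda>j. \<Sum>i\<in>UNIV. v i * f i j)"

text \<open>Pure tensors: basis of A \<otimes> B is 'a \<times> 'b.\<close>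
definition tens :: "'a vec \<Rightarrow> 'b vec \<Rightarrow> ('a \<times> 'b) vec" where
  "tens u w = (\<lambda>(i, j). u i * w j)"

text \<open>Basis v_2 = X = E, v_0 = Z = q^-2 EF - FE, v_{-2} = Y = KF.\<close>
datatype gen = Vp | Vz | Vm

lemma UNIV_gen: "(UNIV :: gen set) = {Vp, Vz, Vm}"
  using gen.exhaust by auto

instance gen :: finite
  by standard (simp add: UNIV_gen)

fun wt_gen :: "gen \<Rightarrow> int" where
  "wt_gen Vp = 2" | "wt_gen Vz = 0" | "wt_gen Vm = -2"

text \<open>
  The left adjoint action ad_x y = x_(1) y S(x_(2)) on the basis X, Z, Y
  (computed from the relations of U_q(sl_2)):
    ad_K X = q^2 X,  ad_K Z = Z,  ad_K Y = q^-2 Y,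
    ad_E X = 0,  ad_E Z = -(q + q^-1) X,  ad_E Y = Z,
    ad_F X = -Z, ad_F Z = (q + q^-1) Y,  ad_F Y = 0.
\<close>
fun E_gen :: "complex \<Rightarrow> gen \<Rightarrow> gen vec" where
  "E_gen q Vp = 0"
| "E_gen q Vz = sc (- (q + inverse q)) (bv Vp)"
| "E_gen q Vm = bv Vz"

fun F_gen :: "complex \<Rightarrow> gen \<Rightarrow> gen vec" where
  "F_gen q Vp = sc (-1) (bv Vz)"
| "F_gen q Vz = sc (q + inverse q) (bv Vm)"
| "F_gen q Vm = 0"

definition K_gen :: "complex \<Rightarrow> gen \<Rightarrow> gen vec" where
  "K_gen q g = sc (q powi wt_gen g) (bv g)"

definition Kinv_gen :: "complex \<Rightarrow> gen \<Rightarrow> gen vec" where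
  "Kinv_gen q g = sc (q powi (- wt_gen g)) (bv g)"

definition EV :: "complex \<Rightarrow> gen vec \<Rightarrow> gen vec" where "EV q = linext (E_gen q)"
definition FV :: "complex \<Rightarrow> gen vec \<Rightarrow> gen vec" where "FV q = linext (F_gen q)"

section \<open>The superalgebra Cl_q(sl_2)\<close>

text \<open>
  Cl_q(sl_2) is modelled on its PBW basis of ordered monomials
  v_2^a v_0^b v_{-2}^c with a, b, c in {0,1}; the triple (a,b,c) of booleans
  encodes the monomial.  The algebra structure is given by left multiplication
  by the generators, obtained by rewriting with the defining relations
    v_2 v_2 = 0,  v_{-2} v_{-2} = 0,  v_0 v_2 = -q^-2 v_2 v_0,
    v_{-2} v_0 = -q^-2 v_0 v_{-2},
    v_0 v_0 = (1-q^4)/q^3 v_2 v_{-2} + (q^2+1)/q c,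
    v_{-2} v_2 = - v_2 v_{-2} + (q^2+1)/q^2 c.
\<close>
type_synonym mon = "bool \<times> bool \<times> bool"
type_synonym cl = "mon vec"

definition one_cl :: cl where "one_cl = bv (False, False, False)"

definition gen_cl :: "gen \<Rightarrow> cl" where
  "gen_cl g = bv (g = Vp, g = Vz, g = Vm)"

definition emb :: "gen vec \<Rightarrow> cl" where "emb = linext gen_cl"

definition wt_mon :: "mon \<Rightarrow> int" where
  "wt_mon m = (case m of (a, b, c) \<Rightarrow> 2 * of_bool a - 2 * of_bool c)"

definition par_mon :: "mon \<Rightarrow> nat" where
  "par_mon m = (case m of (a, b, c) \<Rightarrow> (of_bool a + of_bool b + of_bool c) mod 2)"

text \<open>v_2 \<cdot> v_2^a v_0^b v_{-2}^c\<close>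
definition lmul_p_mon :: "mon \<Rightarrow> cl" where
  "lmul_p_mon m = (case m of (a, b, c) \<Rightarrow> if a then 0 else bv (True, b, c))"

text \<open>v_0 \<cdot> v_0^b v_{-2}^c\<close>
definition lmul_z_aux :: "complex \<Rightarrow> complex \<Rightarrow> bool \<Rightarrow> bool \<Rightarrow> cl" where
  "lmul_z_aux q cc b c =
     (if \<not> b then bv (False, True, c)
      else sc ((1 - q^4) / q^3) (if c then 0 else bv (True, False, True))
           + sc ((q^2 + 1) / q * cc) (bv (False, False, c)))"

text \<open>v_0 \<cdot> v_2^a v_0^b v_{-2}^c, using v_0 v_2 = -q^-2 v_2 v_0\<close>
definition lmul_z_mon :: "complex \<Rightarrow> complex \<Rightarrow> mon \<Rightarrow> cl" where
  "lmul_z_mon q cc m = (case m of (a, b, c) \<Rightarrow>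
     if a then sc (- inverse (q^2)) (linext lmul_p_mon (lmul_z_aux q cc b c))
     else lmul_z_aux q cc b c)"

text \<open>v_{-2} \<cdot> v_0^b v_{-2}^c, using v_{-2} v_0 = -q^-2 v_0 v_{-2}\<close>
definition lmul_m_aux :: "complex \<Rightarrow> bool \<Rightarrow> bool \<Rightarrow> cl" where
  "lmul_m_aux q b c =
     (if c then 0
      else if b then sc (- inverse (q^2)) (bv (False, True, True))
      else bv (False, False, True))"

text \<open>v_{-2} \<cdot> v_2^a v_0^b v_{-2}^c, using v_{-2} v_2 = - v_2 v_{-2} + (q^2+1)/q^2 c\<close>
definition lmul_m_mon :: "complex \<Rightarrow> complex \<Rightarrow> mon \<Rightarrow> cl" where
  "lmul_m_mon q cc m = (case m of (a, b, c) \<Rightarrow>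
     if a then sc (-1) (linext lmul_p_mon (lmul_m_aux q b c))
               + sc ((q^2 + 1) / q^2 * cc) (bv (False, b, c))
     else lmul_m_aux q b c)"

fun lmul_mon :: "complex \<Rightarrow> complex \<Rightarrow> gen \<Rightarrow> mon \<Rightarrow> cl" where
  "lmul_mon q cc Vp = lmul_p_mon"
| "lmul_mon q cc Vz = lmul_z_mon q cc"
| "lmul_mon q cc Vm = lmul_m_mon q cc"

definition lmul :: "complex \<Rightarrow> complex \<Rightarrow> gen \<Rightarrow> cl \<Rightarrow> cl" where
  "lmul q cc g = linext (lmul_mon q cc g)"

definition word :: "mon \<Rightarrow> gen list" where
  "word m = (case m of (a, b, c) \<Rightarrow>
     (if a then [Vp] else []) @ (if b then [Vz] else []) @ (if c then [Vm] else []))"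

definition wprod :: "complex \<Rightarrow> complex \<Rightarrow> gen list \<Rightarrow> cl \<Rightarrow> cl" where
  "wprod q cc w v = foldr (lmul q cc) w v"

definition mult :: "complex \<Rightarrow> complex \<Rightarrow> cl \<Rightarrow> cl \<Rightarrow> cl" where
  "mult q cc u v = linext (\<lambda>m. wprod q cc (word m) v) u"

definition even_part :: "cl \<Rightarrow> cl" where
  "even_part v = (\<lambda>m. if par_mon m = 0 then v m else 0)"

definition odd_part :: "cl \<Rightarrow> cl" where
  "odd_part v = (\<lambda>m. if par_mon m = 1 then v m else 0)"

text \<open>
  Induced from V_{2pi} via the coproduct:
  K(ab) = K(a) K(b), E(ab) = E(a) K(b) + a E(b), F(ab) = F(a) b + K^-1(a) F(b),
  and K(1) = 1, E(1) = F(1) = 0.  Defined on words of generators.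
\<close>
fun actK_w :: "complex \<Rightarrow> complex \<Rightarrow> gen list \<Rightarrow> cl" where
  "actK_w q cc [] = one_cl"
| "actK_w q cc (g # w) = mult q cc (emb (K_gen q g)) (actK_w q cc w)"

fun actE_w :: "complex \<Rightarrow> complex \<Rightarrow> gen list \<Rightarrow> cl" where
  "actE_w q cc [] = 0"
| "actE_w q cc (g # w) =
     mult q cc (emb (E_gen q g)) (actK_w q cc w) + lmul q cc g (actE_w q cc w)"

fun actF_w :: "complex \<Rightarrow> complex \<Rightarrow> gen list \<Rightarrow> cl" where
  "actF_w q cc [] = 0"
| "actF_w q cc (g # w) =
     mult q cc (emb (F_gen q g)) (wprod q cc w one_cl)
     + mult q cc (emb (Kinv_gen q g)) (actF_w q cc w)"

definition actK :: "complex \<Rightarrow> complex \<Rightarrow> cl \<Rightarrow> cl" where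
  "actK q cc = linext (\<lambda>m. actK_w q cc (word m))"
definition actE :: "complex \<Rightarrow> complex \<Rightarrow> cl \<Rightarrow> cl" where
  "actE q cc = linext (\<lambda>m. actE_w q cc (word m))"
definition actF :: "complex \<Rightarrow> complex \<Rightarrow> cl \<Rightarrow> cl" where
  "actF q cc = linext (\<lambda>m. actF_w q cc (word m))"

text \<open>
  Lie derivative: for x = x(Vp) X + x(Vz) Z + x(Vm) Y in sl_q(2) \<subseteq> U_q(sl_2),
  L_x w = x \<triangleright> w, where X = E, Z = q^-2 EF - FE, Y = KF.
\<close>
definition Lie :: "complex \<Rightarrow> complex \<Rightarrow> gen vec \<Rightarrow> cl \<Rightarrow> cl" where
  "Lie q cc x w =
     sc (x Vp) (actE q cc w)
   + sc (x Vz) (sc (inverse (q^2)) (actE q cc (actF q cc w)) - actF q cc (actE q cc w))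
   + sc (x Vm) (actK q cc (actF q cc w))"

section \<open>Braiding\<close>

definition qint :: "complex \<Rightarrow> nat \<Rightarrow> complex" where
  "qint q n = (q ^ n - inverse q ^ n) / (q - inverse q)"

definition qfact :: "complex \<Rightarrow> nat \<Rightarrow> complex" where
  "qfact q n = (\<Prod>k = 1..n. qint q k)"

text \<open>
  Coefficients of the universal R-matrix for the coproduct
  Delta E = E \<otimes> K + 1 \<otimes> E, Delta F = F \<otimes> 1 + K^-1 \<otimes> F:
  R = q^{H \<otimes> H/2} \<Sum>_n q^{n(n-1)/2} (q - q^-1)^n / [n]_q! E^n \<otimes> F^n.
\<close>
definition Rcoef :: "complex \<Rightarrow> nat \<Rightarrow> complex" where
  "Rcoef q n = q powi (int (n * (n - 1) div 2)) * (q - inverse q) ^ n / qfact q n"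

text \<open>
  Braiding sigma_{A,B} = flip \<circ> R : A \<otimes> B \<rightarrow> B \<otimes> A for finite dimensional
  type 1 modules A, B given by a weight basis (weights wA, wB; K acts by
  q^weight), and the actions EA of E on A and FB of F on B.  On a finite
  dimensional type 1 module E is nilpotent with E^(dim A) = 0, so the sum over
  n < CARD('a) is the full R-matrix action.
\<close>
definition braid ::
  "complex \<Rightarrow> ('a::finite \<Rightarrow> int) \<Rightarrow> ('a vec \<Rightarrow> 'a vec) \<Rightarrow>
   ('b::finite \<Rightarrow> int) \<Rightarrow> ('b vec \<Rightarrow> 'b vec) \<Rightarrow> ('a \<times> 'b) vec \<Rightarrow> ('b \<times> 'a) vec" where
  "braid q wA EA wB FB =
     linext (\<lambda>(i, j). \<lambda>(l, k). \<Sum>n<card (UNIV :: 'a set).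
        Rcoef q n * q powi ((wA k * wB l) div 2) * (EA ^^ n) (bv i) k * (FB ^^ n) (bv j) l)"

text \<open>
  (T)^(-1/2) for a diagonalizable operator T whose eigenvalues are of the form
  q^(2k), k \<in> \<int> (as is the double braiding on finite dimensional type 1
  modules): the linear operator acting by q^(-k) on the q^(2k)-eigenspace.
\<close>
definition inv_sqrt :: "complex \<Rightarrow> (('a::finite) vec \<Rightarrow> 'a vec) \<Rightarrow> 'a vec \<Rightarrow> 'a vec" where
  "inv_sqrt q T = (THE S. (\<exists>f. S = linext f) \<and>
      (\<forall>k::int. \<forall>v. T v = sc (q powi (2 * k)) v \<longrightarrow> S v = sc (q powi (- k)) v))"

definition sigma_VCl :: "complex \<Rightarrow> complex \<Rightarrow> (gen \<times> mon) vec \<Rightarrow> (mon \<times> gen) vec" where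
  "sigma_VCl q cc = braid q wt_gen (EV q) wt_mon (actF q cc)"

definition sigma_ClV :: "complex \<Rightarrow> complex \<Rightarrow> (mon \<times> gen) vec \<Rightarrow> (gen \<times> mon) vec" where
  "sigma_ClV q cc = braid q wt_mon (actE q cc) wt_gen (FV q)"

definition nsigma_VCl :: "complex \<Rightarrow> complex \<Rightarrow> (gen \<times> mon) vec \<Rightarrow> (mon \<times> gen) vec" where
  "nsigma_VCl q cc =
     sigma_VCl q cc \<circ> inv_sqrt q (sigma_ClV q cc \<circ> sigma_VCl q cc)"

definition mult_ClV :: "complex \<Rightarrow> complex \<Rightarrow> (mon \<times> gen) vec \<Rightarrow> cl" where
  "mult_ClV q cc = linext (\<lambda>(m, g). mult q cc (bv m) (gen_cl g))"

text \<open>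
  iota_x w = 1/2 [x, w]_{tilde sigma}, with x odd:
  [x, w] = x w - (-1)^{p(w)} m(tilde sigma(x \<otimes> w)) on homogeneous w,
  extended linearly.
\<close>
definition iota :: "complex \<Rightarrow> complex \<Rightarrow> gen vec \<Rightarrow> cl \<Rightarrow> cl" where
  "iota q cc x w = sc (1/2)
     (mult q cc (emb x) w
      - mult_ClV q cc (nsigma_VCl q cc (tens x (even_part w)))
      + mult_ClV q cc (nsigma_VCl q cc (tens x (odd_part w))))"

definition gamma_q :: "complex \<Rightarrow> complex \<Rightarrow> cl" where
  "gamma_q q cc = sc (- 1 / (2 * cc^2))
     (sc cc (gen_cl Vz)
      + mult q cc (gen_cl Vp) (mult q cc (gen_cl Vz) (gen_cl Vm)))"

definition dCl :: "complex \<Rightarrow> complex \<Rightarrow> cl \<Rightarrow> cl" where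
  "dCl q cc w = mult q cc (gamma_q q cc) w
     - mult q cc (even_part w) (gamma_q q cc)
     + mult q cc (odd_part w) (gamma_q q cc)"

end

theory Submission
  imports Defs
begin


definition mkcl :: "complex \<Rightarrow> complex \<Rightarrow> complex \<Rightarrow> complex \<Rightarrow> complex \<Rightarrow> complex \<Rightarrow> complex \<Rightarrow> complex \<Rightarrow> cl" where
  "mkcl a0 a1 a2 a3 a4 a5 a6 a7 = (\<lambda>(x,y,z). if x then (if y then (if z then a7 else a6) else (if z then a5 else a4))
      else (if y then (if z then a3 else a2) else (if z then a1 else a0)))"

lemma mkcl_app[simp]:
  "mkcl a0 a1 a2 a3 a4 a5 a6 a7 (False,False,False) = a0"
  "mkcl a0 a1 a2 a3 a4 a5 a6 a7 (False,False,True) = a1"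
  "mkcl a0 a1 a2 a3 a4 a5 a6 a7 (False,True,False) = a2"
  "mkcl a0 a1 a2 a3 a4 a5 a6 a7 (False,True,True) = a3"
  "mkcl a0 a1 a2 a3 a4 a5 a6 a7 (True,False,False) = a4"
  "mkcl a0 a1 a2 a3 a4 a5 a6 a7 (True,False,True) = a5"
  "mkcl a0 a1 a2 a3 a4 a5 a6 a7 (True,True,False) = a6"
  "mkcl a0 a1 a2 a3 a4 a5 a6 a7 (True,True,True) = a7"
  by (simp_all add: mkcl_def)

lemma cl_eta: "(v::cl) = mkcl (v (False,False,False)) (v (False,False,True)) (v (False,True,False)) (v (False,True,True))
   (v (True,False,False)) (v (True,False,True)) (v (True,True,False)) (v (True,True,True))"
  by (rule ext) (auto simp: mkcl_def)

lemma mkcl_eq_iff: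
  "(mkcl a0 a1 a2 a3 a4 a5 a6 a7 = mkcl b0 b1 b2 b3 b4 b5 b6 b7) \<longleftrightarrow>
   (a0 = b0 \<and> a1 = b1 \<and> a2 = b2 \<and> a3 = b3 \<and> a4 = b4 \<and> a5 = b5 \<and> a6 = b6 \<and> a7 = b7)"
  by (metis mkcl_app)

lemma mkcl_add[simp]: "mkcl a0 a1 a2 a3 a4 a5 a6 a7 + mkcl b0 b1 b2 b3 b4 b5 b6 b7 =
   mkcl (a0+b0) (a1+b1) (a2+b2) (a3+b3) (a4+b4) (a5+b5) (a6+b6) (a7+b7)"
  by (rule ext) (auto simp: mkcl_def)

lemma mkcl_diff[simp]: "mkcl a0 a1 a2 a3 a4 a5 a6 a7 - mkcl b0 b1 b2 b3 b4 b5 b6 b7 =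
   mkcl (a0-b0) (a1-b1) (a2-b2) (a3-b3) (a4-b4) (a5-b5) (a6-b6) (a7-b7)"
  by (rule ext) (auto simp: mkcl_def)

lemma mkcl_sc[simp]: "sc c (mkcl a0 a1 a2 a3 a4 a5 a6 a7) =
   mkcl (c*a0) (c*a1) (c*a2) (c*a3) (c*a4) (c*a5) (c*a6) (c*a7)"
  by (rule ext) (auto simp: mkcl_def sc_def)

lemma mkcl_zero: "(0::cl) = mkcl 0 0 0 0 0 0 0 0"
  by (rule ext) (auto simp: mkcl_def)

lemma bv_mon:
  "bv (False,False,False) = mkcl 1 0 0 0 0 0 0 0"
  "bv (False,False,True) = mkcl 0 1 0 0 0 0 0 0"
  "bv (False,True,False) = mkcl 0 0 1 0 0 0 0 0"
  "bv (False,True,True) = mkcl 0 0 0 1 0 0 0 0"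
  "bv (True,False,False) = mkcl 0 0 0 0 1 0 0 0"
  "bv (True,False,True) = mkcl 0 0 0 0 0 1 0 0"
  "bv (True,True,False) = mkcl 0 0 0 0 0 0 1 0"
  "bv (True,True,True) = mkcl 0 0 0 0 0 0 0 1"
  by (rule ext, auto simp: mkcl_def bv_def split: if_splits)+

lemma UNIV_mon: "(UNIV :: mon set) = {(False,False,False),(False,False,True),(False,True,False),(False,True,True),
   (True,False,False),(True,False,True),(True,True,False),(True,True,True)}"
  by auto

lemma sum_mon: "(\<Sum>m\<in>(UNIV::mon set). f m) = f (False,False,False) + f (False,False,True) + f (False,True,False) + f (False,True,True)
   + f (True,False,False) + f (True,False,True) + f (True,True,False) + f (True,True,True)"
  by (simp add: UNIV_mon add.assoc)

lemma sum_gen: "(\<Sum>g\<in>(UNIV::gen set). f g) = f Vp + f Vz + f Vm"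
  by (simp add: UNIV_gen add.assoc)

lemma linext_mkcl: "linext f (mkcl a0 a1 a2 a3 a4 a5 a6 a7) =
   sc a0 (f (False,False,False)) + sc a1 (f (False,False,True)) + sc a2 (f (False,True,False)) + sc a3 (f (False,True,True))
 + sc a4 (f (True,False,False)) + sc a5 (f (True,False,True)) + sc a6 (f (True,True,False)) + sc a7 (f (True,True,True))"
  by (rule ext) (simp add: linext_def sum_mon sc_def)

definition mkG :: "complex \<Rightarrow> complex \<Rightarrow> complex \<Rightarrow> gen vec" where
  "mkG a b c = (\<lambda>g. case g of Vp \<Rightarrow> a | Vz \<Rightarrow> b | Vm \<Rightarrow> c)"

lemma mkG_app[simp]: "mkG a b c Vp = a" "mkG a b c Vz = b" "mkG a b c Vm = c"
  by (simp_all add: mkG_def)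

lemma mkG_add[simp]: "mkG a b c + mkG a' b' c' = mkG (a+a') (b+b') (c+c')"
  by (rule ext) (simp add: mkG_def split: gen.split)
lemma mkG_diff[simp]: "mkG a b c - mkG a' b' c' = mkG (a-a') (b-b') (c-c')"
  by (rule ext) (simp add: mkG_def split: gen.split)
lemma mkG_sc[simp]: "sc d (mkG a b c) = mkG (d*a) (d*b) (d*c)"
  by (rule ext) (simp add: mkG_def sc_def split: gen.split)
lemma mkG_zero: "(0::gen vec) = mkG 0 0 0"
  by (rule ext) (simp add: mkG_def split: gen.split)
lemma bv_gen: "bv Vp = mkG 1 0 0" "bv Vz = mkG 0 1 0" "bv Vm = mkG 0 0 1"
  by (rule ext, simp add: mkG_def bv_def split: gen.split)+
lemma mkG_eq_iff: "(mkG a b c = mkG a' b' c') \<longleftrightarrow> a = a' \<and> b = b' \<and> c = c'"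
  by (metis mkG_app)
lemma gen_eta: "(v::gen vec) = mkG (v Vp) (v Vz) (v Vm)"
  by (rule ext) (simp add: mkG_def split: gen.split)
lemma linext_mkG: "linext f (mkG a b c) = sc a (f Vp) + sc b (f Vz) + sc c (f Vm)"
  by (rule ext) (simp add: linext_def sum_gen sc_def)

lemma linext_bv: "linext f (bv i) = f i"
proof (rule ext)
  fix j
  have "(\<Sum>k\<in>UNIV. bv i k * f k j) = (\<Sum>k\<in>UNIV. if k = i then f i j else 0)"
    by (rule sum.cong) (auto simp: bv_def)
  then show "linext f (bv i) j = f i j" by (simp add: linext_def)
qed

definition mkGM :: "cl \<Rightarrow> cl \<Rightarrow> cl \<Rightarrow> (gen \<times> mon) vec" where
  "mkGM A B C = (\<lambda>(g,m). case g of Vp \<Rightarrow> A m | Vz \<Rightarrow> B m | Vm \<Rightarrow> C m)"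
definition mkMG :: "cl \<Rightarrow> cl \<Rightarrow> cl \<Rightarrow> (mon \<times> gen) vec" where
  "mkMG A B C = (\<lambda>(m,g). case g of Vp \<Rightarrow> A m | Vz \<Rightarrow> B m | Vm \<Rightarrow> C m)"

lemma mkGM_app[simp]: "mkGM A B C (Vp,m) = A m" "mkGM A B C (Vz,m) = B m" "mkGM A B C (Vm,m) = C m"
  by (simp_all add: mkGM_def)
lemma mkMG_app[simp]: "mkMG A B C (m,Vp) = A m" "mkMG A B C (m,Vz) = B m" "mkMG A B C (m,Vm) = C m"
  by (simp_all add: mkMG_def)
lemma mkGM_add[simp]: "mkGM A B C + mkGM A' B' C' = mkGM (A+A') (B+B') (C+C')"
  by (rule ext) (auto simp: mkGM_def split: gen.split)
lemma mkGM_diff[simp]: "mkGM A B C - mkGM A' B' C' = mkGM (A-A') (B-B') (C-C')"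
  by (rule ext) (auto simp: mkGM_def split: gen.split)
lemma mkGM_sc[simp]: "sc d (mkGM A B C) = mkGM (sc d A) (sc d B) (sc d C)"
  by (rule ext) (auto simp: mkGM_def sc_def split: gen.split)
lemma mkMG_add[simp]: "mkMG A B C + mkMG A' B' C' = mkMG (A+A') (B+B') (C+C')"
  by (rule ext) (auto simp: mkMG_def split: gen.split)
lemma mkMG_diff[simp]: "mkMG A B C - mkMG A' B' C' = mkMG (A-A') (B-B') (C-C')"
  by (rule ext) (auto simp: mkMG_def split: gen.split)
lemma mkMG_sc[simp]: "sc d (mkMG A B C) = mkMG (sc d A) (sc d B) (sc d C)"
  by (rule ext) (auto simp: mkMG_def sc_def split: gen.split)
lemma GM_eta_aux: "A = (\<lambda>m. A m)" by simp
lemma MG_eta_aux: "A = (\<lambda>m. A m)" by simp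
lemma mkGM_eq_iff: "(mkGM A B C = mkGM A' B' C') \<longleftrightarrow> A = A' \<and> B = B' \<and> C = C'"
proof
  assume h: "mkGM A B C = mkGM A' B' C'"
  show "A = A' \<and> B = B' \<and> C = C'"
  proof (intro conjI ext)
    fix m
    show "A m = A' m" using fun_cong[OF h, of "(Vp,m)"] by simp
    show "B m = B' m" using fun_cong[OF h, of "(Vz,m)"] by simp
    show "C m = C' m" using fun_cong[OF h, of "(Vm,m)"] by simp
  qed
qed simp
lemma mkMG_eq_iff: "(mkMG A B C = mkMG A' B' C') \<longleftrightarrow> A = A' \<and> B = B' \<and> C = C'"
proof
  assume h: "mkMG A B C = mkMG A' B' C'"
  show "A = A' \<and> B = B' \<and> C = C'"
  proof (intro conjI ext)
    fix m
    show "A m = A' m" using fun_cong[OF h, of "(m,Vp)"] by simp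
    show "B m = B' m" using fun_cong[OF h, of "(m,Vz)"] by simp
    show "C m = C' m" using fun_cong[OF h, of "(m,Vm)"] by simp
  qed
qed simp
lemma GM_eta: "(v::(gen\<times>mon) vec) = mkGM (\<lambda>m. v (Vp,m)) (\<lambda>m. v (Vz,m)) (\<lambda>m. v (Vm,m))"
  by (rule ext) (auto simp: mkGM_def split: gen.split)
lemma MG_eta: "(v::(mon\<times>gen) vec) = mkMG (\<lambda>m. v (m,Vp)) (\<lambda>m. v (m,Vz)) (\<lambda>m. v (m,Vm))"
  by (rule ext) (auto simp: mkMG_def split: gen.split)

lemma sum_GM: "(\<Sum>x\<in>(UNIV::(gen\<times>mon) set). f x) = (\<Sum>m\<in>UNIV. f (Vp,m)) + (\<Sum>m\<in>UNIV. f (Vz,m)) + (\<Sum>m\<in>UNIV. f (Vm,m))"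
proof -
  have "(\<Sum>x\<in>(UNIV::(gen\<times>mon) set). f x) = (\<Sum>g\<in>UNIV. \<Sum>m\<in>UNIV. f (g,m))"
    by (simp add: UNIV_Times_UNIV[symmetric] sum.cartesian_product del: UNIV_Times_UNIV)
  then show ?thesis by (simp add: sum_gen)
qed
lemma sum_MG: "(\<Sum>x\<in>(UNIV::(mon\<times>gen) set). f x) = (\<Sum>m\<in>UNIV. f (m,Vp)) + (\<Sum>m\<in>UNIV. f (m,Vz)) + (\<Sum>m\<in>UNIV. f (m,Vm))"
proof -
  have "(\<Sum>x\<in>(UNIV::(mon\<times>gen) set). f x) = (\<Sum>m\<in>UNIV. \<Sum>g\<in>UNIV. f (m,g))"
    by (simp add: UNIV_Times_UNIV[symmetric] sum.cartesian_product del: UNIV_Times_UNIV)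
  also have "\<dots> = (\<Sum>m\<in>UNIV. f (m,Vp) + f (m,Vz) + f (m,Vm))" by (simp add: sum_gen)
  finally show ?thesis by (simp add: sum.distrib)
qed

lemma linext_mkGM: "linext f (mkGM A B C) = linext (\<lambda>m. f (Vp,m)) A + linext (\<lambda>m. f (Vz,m)) B + linext (\<lambda>m. f (Vm,m)) C"
  by (rule ext) (simp add: linext_def sum_GM)
lemma linext_mkMG: "linext f (mkMG A B C) = linext (\<lambda>m. f (m,Vp)) A + linext (\<lambda>m. f (m,Vz)) B + linext (\<lambda>m. f (m,Vm)) C"
  by (rule ext) (simp add: linext_def sum_MG)

lemma tens_mkG: "tens (mkG a b c) w = mkGM (sc a w) (sc b w) (sc c w)"
  by (rule ext) (auto simp: tens_def mkGM_def sc_def split: gen.split)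

lemma even_mkcl: "even_part (mkcl a0 a1 a2 a3 a4 a5 a6 a7) = mkcl a0 0 0 a3 0 a5 a6 0"
  by (rule ext) (auto simp: even_part_def mkcl_def par_mon_def)
lemma odd_mkcl: "odd_part (mkcl a0 a1 a2 a3 a4 a5 a6 a7) = mkcl 0 a1 a2 0 a4 0 0 a7"
  by (rule ext) (auto simp: odd_part_def mkcl_def par_mon_def)

lemma GM_eta24: "(v::(gen\<times>mon) vec) = mkGM (mkcl (v (Vp,(False,False,False))) (v (Vp,(False,False,True))) (v (Vp,(False,True,False))) (v (Vp,(False,True,True))) (v (Vp,(True,False,False))) (v (Vp,(True,False,True))) (v (Vp,(True,True,False))) (v (Vp,(True,True,True)))) (mkcl (v (Vz,(False,False,False))) (v (Vz,(False,False,True))) (v (Vz,(False,True,False))) (v (Vz,(False,True,True))) (v (Vz,(True,False,False))) (v (Vz,(True,False,True))) (v (Vz,(True,True,False))) (v (Vz,(True,True,True)))) (mkcl (v (Vm,(False,False,False))) (v (Vm,(False,False,True))) (v (Vm,(False,True,False))) (v (Vm,(False,True,True))) (v (Vm,(True,False,False))) (v (Vm,(True,False,True))) (v (Vm,(True,True,False))) (v (Vm,(True,True,True))))"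
  apply (rule ext)
  subgoal for x by (cases x; case_tac a; auto simp: mkcl_def)
  done
lemma MG_eta24: "(v::(mon\<times>gen) vec) = mkMG (mkcl (v ((False,False,False),Vp)) (v ((False,False,True),Vp)) (v ((False,True,False),Vp)) (v ((False,True,True),Vp)) (v ((True,False,False),Vp)) (v ((True,False,True),Vp)) (v ((True,True,False),Vp)) (v ((True,True,True),Vp))) (mkcl (v ((False,False,False),Vz)) (v ((False,False,True),Vz)) (v ((False,True,False),Vz)) (v ((False,True,True),Vz)) (v ((True,False,False),Vz)) (v ((True,False,True),Vz)) (v ((True,True,False),Vz)) (v ((True,True,True),Vz))) (mkcl (v ((False,False,False),Vm)) (v ((False,False,True),Vm)) (v ((False,True,False),Vm)) (v ((False,True,True),Vm)) (v ((True,False,False),Vm)) (v ((True,False,True),Vm)) (v ((True,True,False),Vm)) (v ((True,True,True),Vm)))"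
  apply (rule ext)
  subgoal for x by (cases x; case_tac b; auto simp: mkcl_def)
  done

definition braid_k ::
  "complex \<Rightarrow> ('a::finite \<Rightarrow> int) \<Rightarrow> ('a vec \<Rightarrow> 'a vec) \<Rightarrow>
   ('b::finite \<Rightarrow> int) \<Rightarrow> ('b vec \<Rightarrow> 'b vec) \<Rightarrow> ('a \<times> 'b) \<Rightarrow> ('b \<times> 'a) vec" where
  "braid_k q wA EA wB FB = (\<lambda>(i, j). \<lambda>(l, k). \<Sum>n<card (UNIV :: 'a set).
        Rcoef q n * q powi ((wA k * wB l) div 2) * (EA ^^ n) (bv i) k * (FB ^^ n) (bv j) l)"

lemma braid_eq: "braid q wA EA wB FB = linext (braid_k q wA EA wB FB)"
  by (simp add: braid_def braid_k_def)

lemma funpow_012: "(f ^^ 0) x = x" "(f ^^ 1) x = f x" "(f ^^ 2) x = f (f x)"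
  by (simp_all add: numeral_2_eq_2)

lemma sum_lt3: "(\<Sum>n<(3::nat). h n) = h 0 + h 1 + h 2"
  by (simp add: numeral_3_eq_3 lessThan_Suc add.commute add.left_commute numeral_2_eq_2)

lemma card_gen: "card (UNIV::gen set) = 3" by (simp add: UNIV_gen)
lemma card_mon: "card (UNIV::mon set) = 8" by (simp add: UNIV_mon)

lemma funpow_zero3:
  assumes "\<And>v. F (F (F v)) = 0" "F 0 = 0" "n \<ge> 3"
  shows "(F ^^ n) v = 0"
proof -
  have z: "(F ^^ m) 0 = 0" for m by (induction m) (simp_all add: assms(2))
  obtain m where "n = m + 3" using assms(3) by (metis add.commute le_Suc_ex)
  then have "(F ^^ n) v = (F ^^ m) ((F ^^ 3) v)" by (simp add: funpow_add)
  also have "(F ^^ 3) v = F (F (F v))" by (simp add: numeral_3_eq_3)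
  finally show ?thesis using assms(1) z by simp
qed

lemma braid_k_trunc:
  assumes "\<And>v. FB (FB (FB v)) = 0" "FB 0 = 0" "card (UNIV :: 'a::finite set) \<ge> 3"
  shows "braid_k q (wA::'a\<Rightarrow>int) EA (wB::'b::finite\<Rightarrow>int) FB (i,j) (l,k) =
    (\<Sum>n<3. Rcoef q n * q powi ((wA k * wB l) div 2) * (EA ^^ n) (bv i) k * (FB ^^ n) (bv j) l)"
proof -
  let ?h = "\<lambda>n. Rcoef q n * q powi ((wA k * wB l) div 2) * (EA ^^ n) (bv i) k * (FB ^^ n) (bv j) l"
  have "(\<Sum>n<card (UNIV :: 'a set). ?h n) = (\<Sum>n<3. ?h n) + (\<Sum>n\<in>{3..<card (UNIV :: 'a set)}. ?h n)"
    using assms(3) by (metis (no_types, lifting) lessThan_atLeast0 sum.atLeastLessThan_concat zero_le)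
  moreover have "(\<Sum>n\<in>{3..<card (UNIV :: 'a set)}. ?h n) = 0"
    by (rule sum.neutral) (simp add: funpow_zero3[OF assms(1,2)])
  ultimately show ?thesis by (simp add: braid_k_def)
qed

locale qc =
  fixes q cc s :: complex
  assumes q0[simp]: "q \<noteq> 0" and c0[simp]: "cc \<noteq> 0" and qp[simp]: "q^2 + 1 \<noteq> 0" and qm[simp]: "q^2 - 1 \<noteq> 0"
    and s_def: "s = q^2 + 1"
begin
lemma qi0[simp]: "q - inverse q \<noteq> 0"
proof
  assume "q - inverse q = 0"
  then have "q * q - q * inverse q = 0" by (metis mult_zero_right right_diff_distrib)
  then have "q^2 - 1 = 0" by (simp add: power2_eq_square)
  then show False using qm by blast
qed
lemma Rcoef0[simp]: "Rcoef q 0 = 1" by (simp add: Rcoef_def qfact_def)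
lemma Rcoef1[simp]: "Rcoef q 1 = q - 1 / q" by (simp add: Rcoef_def qfact_def qint_def divide_inverse)
lemma s0[simp]: "s \<noteq> 0" using s_def qp by simp
lemma Rcoef2[simp]: "Rcoef q 2 = (q^2 - 1)^2 / s"
proof -
  have "{1..2::nat} = {1,2}" by auto
  then have f: "qfact q 2 = qint q 1 * qint q 2" by (simp add: qfact_def)
  have "q^2 - inverse q ^2 = (q - inverse q) * (q + inverse q)" by (simp add: algebra_simps power2_eq_square)
  then have "qint q 2 = q + 1/q" using qi0 by (simp add: qint_def divide_inverse)
  then have "Rcoef q 2 = q * (q - 1/q)^2 / (q + 1/q)" using f by (simp add: Rcoef_def qint_def divide_inverse)
  also have "\<dots> = (q^2 - 1)^2 / (q^2 + 1)"
  proof -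
    have b: "q + 1/q = (q^2+1)/q" using q0 by (simp add: field_simps power2_eq_square)
    have B0: "q + 1/q \<noteq> 0" unfolding b using q0 qp by simp
    have "q * (q - 1/q)^2 * (q^2 + 1) = (q^2 - 1)^2 * (q + 1/q)"
      using q0 by (simp add: field_simps) algebra
    then show ?thesis using B0 qp by (simp add: frac_eq_eq)
  qed
  finally show ?thesis using s_def by simp
qed
end


context qc begin
lemma lmul_mon_Vp_0[simp]: "lmul_p_mon (False,False,False) = mkcl (0) (0) (0) (0) (((1))) (0) (0) (0)"
  by (simp add: lmul_p_mon_def lmul_z_mon_def lmul_z_aux_def lmul_m_mon_def lmul_m_aux_def bv_mon mkcl_zero linext_mkcl mkcl_eq_iff; (simp add: field_simps)?; (simp only: s_def)?; (algebra)?)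

lemma lmul_mon_Vp_1[simp]: "lmul_p_mon (False,False,True) = mkcl (0) (0) (0) (0) (0) (((1))) (0) (0)"
  by (simp add: lmul_p_mon_def lmul_z_mon_def lmul_z_aux_def lmul_m_mon_def lmul_m_aux_def bv_mon mkcl_zero linext_mkcl mkcl_eq_iff; (simp add: field_simps)?; (simp only: s_def)?; (algebra)?)

lemma lmul_mon_Vp_2[simp]: "lmul_p_mon (False,True,False) = mkcl (0) (0) (0) (0) (0) (0) (((1))) (0)"
  by (simp add: lmul_p_mon_def lmul_z_mon_def lmul_z_aux_def lmul_m_mon_def lmul_m_aux_def bv_mon mkcl_zero linext_mkcl mkcl_eq_iff; (simp add: field_simps)?; (simp only: s_def)?; (algebra)?)

lemma lmul_mon_Vp_3[simp]: "lmul_p_mon (False,True,True) = mkcl (0) (0) (0) (0) (0) (0) (0) (((1)))"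
  by (simp add: lmul_p_mon_def lmul_z_mon_def lmul_z_aux_def lmul_m_mon_def lmul_m_aux_def bv_mon mkcl_zero linext_mkcl mkcl_eq_iff; (simp add: field_simps)?; (simp only: s_def)?; (algebra)?)

lemma lmul_mon_Vp_4[simp]: "lmul_p_mon (True,False,False) = mkcl (0) (0) (0) (0) (0) (0) (0) (0)"
  by (simp add: lmul_p_mon_def lmul_z_mon_def lmul_z_aux_def lmul_m_mon_def lmul_m_aux_def bv_mon mkcl_zero linext_mkcl mkcl_eq_iff; (simp add: field_simps)?; (simp only: s_def)?; (algebra)?)

lemma lmul_mon_Vp_5[simp]: "lmul_p_mon (True,False,True) = mkcl (0) (0) (0) (0) (0) (0) (0) (0)"
  by (simp add: lmul_p_mon_def lmul_z_mon_def lmul_z_aux_def lmul_m_mon_def lmul_m_aux_def bv_mon mkcl_zero linext_mkcl mkcl_eq_iff; (simp add: field_simps)?; (simp only: s_def)?; (algebra)?)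

lemma lmul_mon_Vp_6[simp]: "lmul_p_mon (True,True,False) = mkcl (0) (0) (0) (0) (0) (0) (0) (0)"
  by (simp add: lmul_p_mon_def lmul_z_mon_def lmul_z_aux_def lmul_m_mon_def lmul_m_aux_def bv_mon mkcl_zero linext_mkcl mkcl_eq_iff; (simp add: field_simps)?; (simp only: s_def)?; (algebra)?)

lemma lmul_mon_Vp_7[simp]: "lmul_p_mon (True,True,True) = mkcl (0) (0) (0) (0) (0) (0) (0) (0)"
  by (simp add: lmul_p_mon_def lmul_z_mon_def lmul_z_aux_def lmul_m_mon_def lmul_m_aux_def bv_mon mkcl_zero linext_mkcl mkcl_eq_iff; (simp add: field_simps)?; (simp only: s_def)?; (algebra)?)

lemma lmul_mon_Vz_0[simp]: "lmul_z_mon q cc (False,False,False) = mkcl (0) (0) (((1))) (0) (0) (0) (0) (0)"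
  by (simp add: lmul_p_mon_def lmul_z_mon_def lmul_z_aux_def lmul_m_mon_def lmul_m_aux_def bv_mon mkcl_zero linext_mkcl mkcl_eq_iff; (simp add: field_simps)?; (simp only: s_def)?; (algebra)?)

lemma lmul_mon_Vz_1[simp]: "lmul_z_mon q cc (False,False,True) = mkcl (0) (0) (0) (((1))) (0) (0) (0) (0)"
  by (simp add: lmul_p_mon_def lmul_z_mon_def lmul_z_aux_def lmul_m_mon_def lmul_m_aux_def bv_mon mkcl_zero linext_mkcl mkcl_eq_iff; (simp add: field_simps)?; (simp only: s_def)?; (algebra)?)

lemma lmul_mon_Vz_2[simp]: "lmul_z_mon q cc (False,True,False) = mkcl (((q^2 + 1) * cc / (q))) (0) (0) (0) (0) (((- (q^4) + 1) / (q^3))) (0) (0)"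
  by (simp add: lmul_p_mon_def lmul_z_mon_def lmul_z_aux_def lmul_m_mon_def lmul_m_aux_def bv_mon mkcl_zero linext_mkcl mkcl_eq_iff; (simp add: field_simps)?; (simp only: s_def)?; (algebra)?)

lemma lmul_mon_Vz_3[simp]: "lmul_z_mon q cc (False,True,True) = mkcl (0) (((q^2 + 1) * cc / (q))) (0) (0) (0) (0) (0) (0)"
  by (simp add: lmul_p_mon_def lmul_z_mon_def lmul_z_aux_def lmul_m_mon_def lmul_m_aux_def bv_mon mkcl_zero linext_mkcl mkcl_eq_iff; (simp add: field_simps)?; (simp only: s_def)?; (algebra)?)

lemma lmul_mon_Vz_4[simp]: "lmul_z_mon q cc (True,False,False) = mkcl (0) (0) (0) (0) (0) (0) (((- (1)) / (q^2))) (0)"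
  by (simp add: lmul_p_mon_def lmul_z_mon_def lmul_z_aux_def lmul_m_mon_def lmul_m_aux_def bv_mon mkcl_zero linext_mkcl mkcl_eq_iff; (simp add: field_simps)?; (simp only: s_def)?; (algebra)?)

lemma lmul_mon_Vz_5[simp]: "lmul_z_mon q cc (True,False,True) = mkcl (0) (0) (0) (0) (0) (0) (0) (((- (1)) / (q^2)))"
  by (simp add: lmul_p_mon_def lmul_z_mon_def lmul_z_aux_def lmul_m_mon_def lmul_m_aux_def bv_mon mkcl_zero linext_mkcl mkcl_eq_iff; (simp add: field_simps)?; (simp only: s_def)?; (algebra)?)

lemma lmul_mon_Vz_6[simp]: "lmul_z_mon q cc (True,True,False) = mkcl (0) (0) (0) (0) (((- (q^2) - 1) * cc / (q^3))) (0) (0) (0)"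
  by (simp add: lmul_p_mon_def lmul_z_mon_def lmul_z_aux_def lmul_m_mon_def lmul_m_aux_def bv_mon mkcl_zero linext_mkcl mkcl_eq_iff; (simp add: field_simps)?; (simp only: s_def)?; (algebra)?)

lemma lmul_mon_Vz_7[simp]: "lmul_z_mon q cc (True,True,True) = mkcl (0) (0) (0) (0) (0) (((- (q^2) - 1) * cc / (q^3))) (0) (0)"
  by (simp add: lmul_p_mon_def lmul_z_mon_def lmul_z_aux_def lmul_m_mon_def lmul_m_aux_def bv_mon mkcl_zero linext_mkcl mkcl_eq_iff; (simp add: field_simps)?; (simp only: s_def)?; (algebra)?)

lemma lmul_mon_Vm_0[simp]: "lmul_m_mon q cc (False,False,False) = mkcl (0) (((1))) (0) (0) (0) (0) (0) (0)"
  by (simp add: lmul_p_mon_def lmul_z_mon_def lmul_z_aux_def lmul_m_mon_def lmul_m_aux_def bv_mon mkcl_zero linext_mkcl mkcl_eq_iff; (simp add: field_simps)?; (simp only: s_def)?; (algebra)?)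

lemma lmul_mon_Vm_1[simp]: "lmul_m_mon q cc (False,False,True) = mkcl (0) (0) (0) (0) (0) (0) (0) (0)"
  by (simp add: lmul_p_mon_def lmul_z_mon_def lmul_z_aux_def lmul_m_mon_def lmul_m_aux_def bv_mon mkcl_zero linext_mkcl mkcl_eq_iff; (simp add: field_simps)?; (simp only: s_def)?; (algebra)?)

lemma lmul_mon_Vm_2[simp]: "lmul_m_mon q cc (False,True,False) = mkcl (0) (0) (0) (((- (1)) / (q^2))) (0) (0) (0) (0)"
  by (simp add: lmul_p_mon_def lmul_z_mon_def lmul_z_aux_def lmul_m_mon_def lmul_m_aux_def bv_mon mkcl_zero linext_mkcl mkcl_eq_iff; (simp add: field_simps)?; (simp only: s_def)?; (algebra)?)

lemma lmul_mon_Vm_3[simp]: "lmul_m_mon q cc (False,True,True) = mkcl (0) (0) (0) (0) (0) (0) (0) (0)"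
  by (simp add: lmul_p_mon_def lmul_z_mon_def lmul_z_aux_def lmul_m_mon_def lmul_m_aux_def bv_mon mkcl_zero linext_mkcl mkcl_eq_iff; (simp add: field_simps)?; (simp only: s_def)?; (algebra)?)

lemma lmul_mon_Vm_4[simp]: "lmul_m_mon q cc (True,False,False) = mkcl (((q^2 + 1) * cc / (q^2))) (0) (0) (0) (0) (((- (1)))) (0) (0)"
  by (simp add: lmul_p_mon_def lmul_z_mon_def lmul_z_aux_def lmul_m_mon_def lmul_m_aux_def bv_mon mkcl_zero linext_mkcl mkcl_eq_iff; (simp add: field_simps)?; (simp only: s_def)?; (algebra)?)

lemma lmul_mon_Vm_5[simp]: "lmul_m_mon q cc (True,False,True) = mkcl (0) (((q^2 + 1) * cc / (q^2))) (0) (0) (0) (0) (0) (0)"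
  by (simp add: lmul_p_mon_def lmul_z_mon_def lmul_z_aux_def lmul_m_mon_def lmul_m_aux_def bv_mon mkcl_zero linext_mkcl mkcl_eq_iff; (simp add: field_simps)?; (simp only: s_def)?; (algebra)?)

lemma lmul_mon_Vm_6[simp]: "lmul_m_mon q cc (True,True,False) = mkcl (0) (0) (((q^2 + 1) * cc / (q^2))) (0) (0) (0) (0) (((1) / (q^2)))"
  by (simp add: lmul_p_mon_def lmul_z_mon_def lmul_z_aux_def lmul_m_mon_def lmul_m_aux_def bv_mon mkcl_zero linext_mkcl mkcl_eq_iff; (simp add: field_simps)?; (simp only: s_def)?; (algebra)?)

lemma lmul_mon_Vm_7[simp]: "lmul_m_mon q cc (True,True,True) = mkcl (0) (0) (0) (((q^2 + 1) * cc / (q^2))) (0) (0) (0) (0)"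
  by (simp add: lmul_p_mon_def lmul_z_mon_def lmul_z_aux_def lmul_m_mon_def lmul_m_aux_def bv_mon mkcl_zero linext_mkcl mkcl_eq_iff; (simp add: field_simps)?; (simp only: s_def)?; (algebra)?)

end

context qc begin
lemma actK_mat[simp]: "actK q cc (mkcl a0 a1 a2 a3 a4 a5 a6 a7) = mkcl (a0 * (((1)))) (a1 * (((1) / (q^2)))) (a2 * (((1)))) (a3 * (((1) / (q^2)))) (a4 * (((q^2)))) (a5 * (((1)))) (a6 * (((q^2)))) (a7 * (((1))))"
  unfolding actK_def linext_mkcl
  by (simp add: word_def wprod_def lmul_def mult_def emb_def gen_cl_def K_gen_def Kinv_gen_def bv_mon bv_gen mkcl_zero mkG_zero linext_mkcl linext_mkG one_cl_def power_int_minus_divide mkcl_eq_iff; (simp add: field_simps)?; (simp only: s_def)?; (algebra)?)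

lemma actE_mat[simp]: "actE q cc (mkcl a0 a1 a2 a3 a4 a5 a6 a7) = mkcl (a3 * (((q^2 + 1) * cc / (q)))) (0) (a1 * (((1)))) (0) (a2 * (((- (q^2) - 1) / (q))) + a7 * (((q^2 + 1) * cc / (q)))) (a3 * (((- (q^2) - 1) / (q)))) (a5 * (((1)))) (0)"
  unfolding actE_def linext_mkcl
  by (simp add: word_def wprod_def lmul_def mult_def emb_def gen_cl_def K_gen_def Kinv_gen_def bv_mon bv_gen mkcl_zero mkG_zero linext_mkcl linext_mkG one_cl_def power_int_minus_divide mkcl_eq_iff; (simp add: field_simps)?; (simp only: s_def)?; (algebra)?)

lemma actF_mat[simp]: "actF q cc (mkcl a0 a1 a2 a3 a4 a5 a6 a7) = mkcl (a6 * (((- (q^2) - 1) * cc / (q)))) (a2 * (((q^2 + 1) / (q))) + a7 * (((- (q^2) - 1) * cc / (q)))) (a4 * (((- (1))))) (a5 * (((- (1))))) (0) (a6 * (((q^2 + 1) / (q)))) (0) (0)"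
  unfolding actF_def linext_mkcl
  by (simp add: word_def wprod_def lmul_def mult_def emb_def gen_cl_def K_gen_def Kinv_gen_def bv_mon bv_gen mkcl_zero mkG_zero linext_mkcl linext_mkG one_cl_def power_int_minus_divide mkcl_eq_iff; (simp add: field_simps)?; (simp only: s_def)?; (algebra)?)

lemma EV_mat[simp]: "EV q (mkG x0 x1 x2) = mkG (x1 * (((- (q^2) - 1) / (q)))) (x2 * (((1)))) (0)"
  unfolding EV_def linext_mkG
  by (simp add: word_def wprod_def lmul_def mult_def emb_def gen_cl_def K_gen_def Kinv_gen_def bv_mon bv_gen mkcl_zero mkG_zero linext_mkcl linext_mkG one_cl_def power_int_minus_divide mkG_eq_iff; (simp add: field_simps)?; (simp only: s_def)?; (algebra)?)

lemma FV_mat[simp]: "FV q (mkG x0 x1 x2) = mkG (0) (x0 * (((- (1))))) (x1 * (((q^2 + 1) / (q))))"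
  unfolding FV_def linext_mkG
  by (simp add: word_def wprod_def lmul_def mult_def emb_def gen_cl_def K_gen_def Kinv_gen_def bv_mon bv_gen mkcl_zero mkG_zero linext_mkcl linext_mkG one_cl_def power_int_minus_divide mkG_eq_iff; (simp add: field_simps)?; (simp only: s_def)?; (algebra)?)

lemma FV0[simp]: "FV q 0 = 0" by (simp add: mkG_zero)
lemma FV3: "FV q (FV q (FV q v)) = 0" by (subst gen_eta) (simp add: mkG_zero)
lemma actF0[simp]: "actF q cc 0 = 0" by (simp add: mkcl_zero)
lemma actF3: "actF q cc (actF q cc (actF q cc v)) = 0" by (subst cl_eta) (simp add: mkcl_zero)
lemma actE0[simp]: "actE q cc 0 = 0" by (simp add: mkcl_zero)
lemma actE3: "actE q cc (actE q cc (actE q cc v)) = 0" by (subst cl_eta) (simp add: mkcl_zero)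
lemma gamma_eq[simp]: "gamma_q q cc = mkcl (0) (0) (((- (1)) / (2 * cc))) (0) (0) (0) (0) (((- (1)) / (2 * cc^2)))"
  unfolding gamma_q_def
  by (simp add: word_def wprod_def lmul_def mult_def emb_def gen_cl_def K_gen_def Kinv_gen_def bv_mon bv_gen mkcl_zero mkG_zero linext_mkcl linext_mkG one_cl_def power_int_minus_divide mkcl_eq_iff; (simp add: field_simps)?; (simp only: s_def)?; (algebra)?)

lemma dCl_mat[simp]: "dCl q cc (mkcl a0 a1 a2 a3 a4 a5 a6 a7) = mkcl (a2 * (((- (q^2) - 1) / (q)))) (0) (0) (a1 * (((- (1)) / (cc)))) (0) (a2 * (((q^2 + 1) / (q * cc))) + a7 * (((- (q^2) - 1) / (q)))) (a4 * (((- (1)) / (cc)))) (0)"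
  unfolding dCl_def
  by (simp add: word_def wprod_def lmul_def mult_def emb_def gen_cl_def K_gen_def Kinv_gen_def bv_mon bv_gen mkcl_zero mkG_zero linext_mkcl linext_mkG one_cl_def power_int_minus_divide even_mkcl odd_mkcl mkcl_eq_iff; (simp add: field_simps)?; (simp only: s_def)?; (algebra)?)

lemma Lie_mat_Vp[simp]: "Lie q cc (mkG (((1))) (0) (0)) (mkcl a0 a1 a2 a3 a4 a5 a6 a7) = mkcl (a3 * (((q^2 + 1) * cc / (q)))) (0) (a1 * (((1)))) (0) (a2 * (((- (q^2) - 1) / (q))) + a7 * (((q^2 + 1) * cc / (q)))) (a3 * (((- (q^2) - 1) / (q)))) (a5 * (((1)))) (0)"
  unfolding Lie_def
  by (simp add: mkcl_eq_iff; (simp add: field_simps)?; (simp only: s_def)?; (algebra)?)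

lemma Lie_mat_Vz[simp]: "Lie q cc (mkG (0) (((1))) (0)) (mkcl a0 a1 a2 a3 a4 a5 a6 a7) = mkcl (a5 * (((q^4 - 1) * cc / (q^3)))) (a1 * (((- (q^2) - 1) / (q)))) (a2 * (((- (q^4) + 1) / (q^3))) + a7 * (((q^4 - 1) * cc / (q^3)))) (a3 * (((- (q^2) - 1) / (q)))) (a4 * (((q^2 + 1) / (q^3)))) (a5 * (((- (q^4) + 1) / (q^3)))) (a6 * (((q^2 + 1) / (q^3)))) (0)"
  unfolding Lie_def
  by (simp add: mkcl_eq_iff; (simp add: field_simps)?; (simp only: s_def)?; (algebra)?)

lemma Lie_mat_Vm[simp]: "Lie q cc (mkG (0) (0) (((1)))) (mkcl a0 a1 a2 a3 a4 a5 a6 a7) = mkcl (a6 * (((- (q^2) - 1) * cc / (q)))) (a2 * (((q^2 + 1) / (q^3))) + a7 * (((- (q^2) - 1) * cc / (q^3)))) (a4 * (((- (1))))) (a5 * (((- (1)) / (q^2)))) (0) (a6 * (((q^2 + 1) / (q)))) (0) (0)"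
  unfolding Lie_def
  by (simp add: mkcl_eq_iff; (simp add: field_simps)?; (simp only: s_def)?; (algebra)?)

end

context qc begin
lemma Rcoef1s[simp]: "Rcoef q (Suc 0) = q - 1/q" using Rcoef1 by simp

lemma K1_Vp_0[simp]: "braid_k q wt_gen (EV q) wt_mon (actF q cc) (Vp,(False,False,False)) = mkMG (mkcl (((1))) (0) (0) (0) (0) (0) (0) (0)) (mkcl (0) (0) (0) (0) (0) (0) (0) (0)) (mkcl (0) (0) (0) (0) (0) (0) (0) (0))"
  apply (rule trans[OF MG_eta24])
  by (simp add: braid_k_def card_gen sum_lt3 funpow_012 bv_mon bv_gen mkcl_zero mkG_zero power_int_minus_divide wt_mon_def mkMG_eq_iff mkcl_eq_iff; (simp add: field_simps)?; (simp only: s_def)?; (algebra)?)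

lemma K1_Vp_1[simp]: "braid_k q wt_gen (EV q) wt_mon (actF q cc) (Vp,(False,False,True)) = mkMG (mkcl (0) (((1) / (q^2))) (0) (0) (0) (0) (0) (0)) (mkcl (0) (0) (0) (0) (0) (0) (0) (0)) (mkcl (0) (0) (0) (0) (0) (0) (0) (0))"
  apply (rule trans[OF MG_eta24])
  by (simp add: braid_k_def card_gen sum_lt3 funpow_012 bv_mon bv_gen mkcl_zero mkG_zero power_int_minus_divide wt_mon_def mkMG_eq_iff mkcl_eq_iff; (simp add: field_simps)?; (simp only: s_def)?; (algebra)?)

lemma K1_Vp_2[simp]: "braid_k q wt_gen (EV q) wt_mon (actF q cc) (Vp,(False,True,False)) = mkMG (mkcl (0) (0) (((1))) (0) (0) (0) (0) (0)) (mkcl (0) (0) (0) (0) (0) (0) (0) (0)) (mkcl (0) (0) (0) (0) (0) (0) (0) (0))"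
  apply (rule trans[OF MG_eta24])
  by (simp add: braid_k_def card_gen sum_lt3 funpow_012 bv_mon bv_gen mkcl_zero mkG_zero power_int_minus_divide wt_mon_def mkMG_eq_iff mkcl_eq_iff; (simp add: field_simps)?; (simp only: s_def)?; (algebra)?)

lemma K1_Vp_3[simp]: "braid_k q wt_gen (EV q) wt_mon (actF q cc) (Vp,(False,True,True)) = mkMG (mkcl (0) (0) (0) (((1) / (q^2))) (0) (0) (0) (0)) (mkcl (0) (0) (0) (0) (0) (0) (0) (0)) (mkcl (0) (0) (0) (0) (0) (0) (0) (0))"
  apply (rule trans[OF MG_eta24])
  by (simp add: braid_k_def card_gen sum_lt3 funpow_012 bv_mon bv_gen mkcl_zero mkG_zero power_int_minus_divide wt_mon_def mkMG_eq_iff mkcl_eq_iff; (simp add: field_simps)?; (simp only: s_def)?; (algebra)?)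

lemma K1_Vp_4[simp]: "braid_k q wt_gen (EV q) wt_mon (actF q cc) (Vp,(True,False,False)) = mkMG (mkcl (0) (0) (0) (0) (((q^2))) (0) (0) (0)) (mkcl (0) (0) (0) (0) (0) (0) (0) (0)) (mkcl (0) (0) (0) (0) (0) (0) (0) (0))"
  apply (rule trans[OF MG_eta24])
  by (simp add: braid_k_def card_gen sum_lt3 funpow_012 bv_mon bv_gen mkcl_zero mkG_zero power_int_minus_divide wt_mon_def mkMG_eq_iff mkcl_eq_iff; (simp add: field_simps)?; (simp only: s_def)?; (algebra)?)

lemma K1_Vp_5[simp]: "braid_k q wt_gen (EV q) wt_mon (actF q cc) (Vp,(True,False,True)) = mkMG (mkcl (0) (0) (0) (0) (0) (((1))) (0) (0)) (mkcl (0) (0) (0) (0) (0) (0) (0) (0)) (mkcl (0) (0) (0) (0) (0) (0) (0) (0))"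
  apply (rule trans[OF MG_eta24])
  by (simp add: braid_k_def card_gen sum_lt3 funpow_012 bv_mon bv_gen mkcl_zero mkG_zero power_int_minus_divide wt_mon_def mkMG_eq_iff mkcl_eq_iff; (simp add: field_simps)?; (simp only: s_def)?; (algebra)?)

lemma K1_Vp_6[simp]: "braid_k q wt_gen (EV q) wt_mon (actF q cc) (Vp,(True,True,False)) = mkMG (mkcl (0) (0) (0) (0) (0) (0) (((q^2))) (0)) (mkcl (0) (0) (0) (0) (0) (0) (0) (0)) (mkcl (0) (0) (0) (0) (0) (0) (0) (0))"
  apply (rule trans[OF MG_eta24])
  by (simp add: braid_k_def card_gen sum_lt3 funpow_012 bv_mon bv_gen mkcl_zero mkG_zero power_int_minus_divide wt_mon_def mkMG_eq_iff mkcl_eq_iff; (simp add: field_simps)?; (simp only: s_def)?; (algebra)?)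

lemma K1_Vp_7[simp]: "braid_k q wt_gen (EV q) wt_mon (actF q cc) (Vp,(True,True,True)) = mkMG (mkcl (0) (0) (0) (0) (0) (0) (0) (((1)))) (mkcl (0) (0) (0) (0) (0) (0) (0) (0)) (mkcl (0) (0) (0) (0) (0) (0) (0) (0))"
  apply (rule trans[OF MG_eta24])
  by (simp add: braid_k_def card_gen sum_lt3 funpow_012 bv_mon bv_gen mkcl_zero mkG_zero power_int_minus_divide wt_mon_def mkMG_eq_iff mkcl_eq_iff; (simp add: field_simps)?; (simp only: s_def)?; (algebra)?)

lemma K1_Vz_0[simp]: "braid_k q wt_gen (EV q) wt_mon (actF q cc) (Vz,(False,False,False)) = mkMG (mkcl (0) (0) (0) (0) (0) (0) (0) (0)) (mkcl (((1))) (0) (0) (0) (0) (0) (0) (0)) (mkcl (0) (0) (0) (0) (0) (0) (0) (0))"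
  apply (rule trans[OF MG_eta24])
  by (simp add: braid_k_def card_gen sum_lt3 funpow_012 bv_mon bv_gen mkcl_zero mkG_zero power_int_minus_divide wt_mon_def mkMG_eq_iff mkcl_eq_iff; (simp add: field_simps)?; (simp only: s_def)?; (algebra)?)

lemma K1_Vz_1[simp]: "braid_k q wt_gen (EV q) wt_mon (actF q cc) (Vz,(False,False,True)) = mkMG (mkcl (0) (0) (0) (0) (0) (0) (0) (0)) (mkcl (0) (((1))) (0) (0) (0) (0) (0) (0)) (mkcl (0) (0) (0) (0) (0) (0) (0) (0))"
  apply (rule trans[OF MG_eta24])
  by (simp add: braid_k_def card_gen sum_lt3 funpow_012 bv_mon bv_gen mkcl_zero mkG_zero power_int_minus_divide wt_mon_def mkMG_eq_iff mkcl_eq_iff; (simp add: field_simps)?; (simp only: s_def)?; (algebra)?)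

lemma K1_Vz_2[simp]: "braid_k q wt_gen (EV q) wt_mon (actF q cc) (Vz,(False,True,False)) = mkMG (mkcl (0) (((- (q^6) - q^4 + q^2 + 1) / (q^5))) (0) (0) (0) (0) (0) (0)) (mkcl (0) (0) (((1))) (0) (0) (0) (0) (0)) (mkcl (0) (0) (0) (0) (0) (0) (0) (0))"
  apply (rule trans[OF MG_eta24])
  by (simp add: braid_k_def card_gen sum_lt3 funpow_012 bv_mon bv_gen mkcl_zero mkG_zero power_int_minus_divide wt_mon_def mkMG_eq_iff mkcl_eq_iff; (simp add: field_simps)?; (simp only: s_def)?; (algebra)?)

lemma K1_Vz_3[simp]: "braid_k q wt_gen (EV q) wt_mon (actF q cc) (Vz,(False,True,True)) = mkMG (mkcl (0) (0) (0) (0) (0) (0) (0) (0)) (mkcl (0) (0) (0) (((1))) (0) (0) (0) (0)) (mkcl (0) (0) (0) (0) (0) (0) (0) (0))"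
  apply (rule trans[OF MG_eta24])
  by (simp add: braid_k_def card_gen sum_lt3 funpow_012 bv_mon bv_gen mkcl_zero mkG_zero power_int_minus_divide wt_mon_def mkMG_eq_iff mkcl_eq_iff; (simp add: field_simps)?; (simp only: s_def)?; (algebra)?)

lemma K1_Vz_4[simp]: "braid_k q wt_gen (EV q) wt_mon (actF q cc) (Vz,(True,False,False)) = mkMG (mkcl (0) (0) (((q^4 - 1) / (q^2))) (0) (0) (0) (0) (0)) (mkcl (0) (0) (0) (0) (((1))) (0) (0) (0)) (mkcl (0) (0) (0) (0) (0) (0) (0) (0))"
  apply (rule trans[OF MG_eta24])
  by (simp add: braid_k_def card_gen sum_lt3 funpow_012 bv_mon bv_gen mkcl_zero mkG_zero power_int_minus_divide wt_mon_def mkMG_eq_iff mkcl_eq_iff; (simp add: field_simps)?; (simp only: s_def)?; (algebra)?)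

lemma K1_Vz_5[simp]: "braid_k q wt_gen (EV q) wt_mon (actF q cc) (Vz,(True,False,True)) = mkMG (mkcl (0) (0) (0) (((q^4 - 1) / (q^4))) (0) (0) (0) (0)) (mkcl (0) (0) (0) (0) (0) (((1))) (0) (0)) (mkcl (0) (0) (0) (0) (0) (0) (0) (0))"
  apply (rule trans[OF MG_eta24])
  by (simp add: braid_k_def card_gen sum_lt3 funpow_012 bv_mon bv_gen mkcl_zero mkG_zero power_int_minus_divide wt_mon_def mkMG_eq_iff mkcl_eq_iff; (simp add: field_simps)?; (simp only: s_def)?; (algebra)?)

lemma K1_Vz_6[simp]: "braid_k q wt_gen (EV q) wt_mon (actF q cc) (Vz,(True,True,False)) = mkMG (mkcl (((q^6 + q^4 - q^2 - 1) * cc / (q^3))) (0) (0) (0) (0) (((- (q^6) - q^4 + q^2 + 1) / (q^3))) (0) (0)) (mkcl (0) (0) (0) (0) (0) (0) (((1))) (0)) (mkcl (0) (0) (0) (0) (0) (0) (0) (0))"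
  apply (rule trans[OF MG_eta24])
  by (simp add: braid_k_def card_gen sum_lt3 funpow_012 bv_mon bv_gen mkcl_zero mkG_zero power_int_minus_divide wt_mon_def mkMG_eq_iff mkcl_eq_iff; (simp add: field_simps)?; (simp only: s_def)?; (algebra)?)

lemma K1_Vz_7[simp]: "braid_k q wt_gen (EV q) wt_mon (actF q cc) (Vz,(True,True,True)) = mkMG (mkcl (0) (((q^6 + q^4 - q^2 - 1) * cc / (q^5))) (0) (0) (0) (0) (0) (0)) (mkcl (0) (0) (0) (0) (0) (0) (0) (((1)))) (mkcl (0) (0) (0) (0) (0) (0) (0) (0))"
  apply (rule trans[OF MG_eta24])
  by (simp add: braid_k_def card_gen sum_lt3 funpow_012 bv_mon bv_gen mkcl_zero mkG_zero power_int_minus_divide wt_mon_def mkMG_eq_iff mkcl_eq_iff; (simp add: field_simps)?; (simp only: s_def)?; (algebra)?)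

lemma K1_Vm_0[simp]: "braid_k q wt_gen (EV q) wt_mon (actF q cc) (Vm,(False,False,False)) = mkMG (mkcl (0) (0) (0) (0) (0) (0) (0) (0)) (mkcl (0) (0) (0) (0) (0) (0) (0) (0)) (mkcl (((1))) (0) (0) (0) (0) (0) (0) (0))"
  apply (rule trans[OF MG_eta24])
  by (simp add: braid_k_def card_gen sum_lt3 funpow_012 bv_mon bv_gen mkcl_zero mkG_zero power_int_minus_divide wt_mon_def mkMG_eq_iff mkcl_eq_iff; (simp add: field_simps)?; (simp only: s_def)?; (algebra)?)

lemma K1_Vm_1[simp]: "braid_k q wt_gen (EV q) wt_mon (actF q cc) (Vm,(False,False,True)) = mkMG (mkcl (0) (0) (0) (0) (0) (0) (0) (0)) (mkcl (0) (0) (0) (0) (0) (0) (0) (0)) (mkcl (0) (((q^2))) (0) (0) (0) (0) (0) (0))"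
  apply (rule trans[OF MG_eta24])
  by (simp add: braid_k_def card_gen sum_lt3 funpow_012 bv_mon bv_gen mkcl_zero mkG_zero power_int_minus_divide wt_mon_def mkMG_eq_iff mkcl_eq_iff; (simp add: field_simps)?; (simp only: s_def)?; (algebra)?)

lemma K1_Vm_2[simp]: "braid_k q wt_gen (EV q) wt_mon (actF q cc) (Vm,(False,True,False)) = mkMG (mkcl (0) (0) (0) (0) (0) (0) (0) (0)) (mkcl (0) (((q^4 - 1) / (q^2))) (0) (0) (0) (0) (0) (0)) (mkcl (0) (0) (((1))) (0) (0) (0) (0) (0))"
  apply (rule trans[OF MG_eta24])
  by (simp add: braid_k_def card_gen sum_lt3 funpow_012 bv_mon bv_gen mkcl_zero mkG_zero power_int_minus_divide wt_mon_def mkMG_eq_iff mkcl_eq_iff; (simp add: field_simps)?; (simp only: s_def)?; (algebra)?)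

lemma K1_Vm_3[simp]: "braid_k q wt_gen (EV q) wt_mon (actF q cc) (Vm,(False,True,True)) = mkMG (mkcl (0) (0) (0) (0) (0) (0) (0) (0)) (mkcl (0) (0) (0) (0) (0) (0) (0) (0)) (mkcl (0) (0) (0) (((q^2))) (0) (0) (0) (0))"
  apply (rule trans[OF MG_eta24])
  by (simp add: braid_k_def card_gen sum_lt3 funpow_012 bv_mon bv_gen mkcl_zero mkG_zero power_int_minus_divide wt_mon_def mkMG_eq_iff mkcl_eq_iff; (simp add: field_simps)?; (simp only: s_def)?; (algebra)?)

lemma K1_Vm_4[simp]: "braid_k q wt_gen (EV q) wt_mon (actF q cc) (Vm,(True,False,False)) = mkMG (mkcl (0) (((q^6 - q^4 - q^2 + 1) / (q^4))) (0) (0) (0) (0) (0) (0)) (mkcl (0) (0) (((- (q^2) + 1) / (q))) (0) (0) (0) (0) (0)) (mkcl (0) (0) (0) (0) (((1) / (q^2))) (0) (0) (0))"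
  apply (rule trans[OF MG_eta24])
  by (simp add: braid_k_def card_gen sum_lt3 funpow_012 bv_mon bv_gen mkcl_zero mkG_zero power_int_minus_divide wt_mon_def mkMG_eq_iff mkcl_eq_iff; (simp add: field_simps)?; (simp only: s_def)?; (algebra)?)

lemma K1_Vm_5[simp]: "braid_k q wt_gen (EV q) wt_mon (actF q cc) (Vm,(True,False,True)) = mkMG (mkcl (0) (0) (0) (0) (0) (0) (0) (0)) (mkcl (0) (0) (0) (((- (q^2) + 1) / (q))) (0) (0) (0) (0)) (mkcl (0) (0) (0) (0) (0) (((1))) (0) (0))"
  apply (rule trans[OF MG_eta24])
  by (simp add: braid_k_def card_gen sum_lt3 funpow_012 bv_mon bv_gen mkcl_zero mkG_zero power_int_minus_divide wt_mon_def mkMG_eq_iff mkcl_eq_iff; (simp add: field_simps)?; (simp only: s_def)?; (algebra)?)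

lemma K1_Vm_6[simp]: "braid_k q wt_gen (EV q) wt_mon (actF q cc) (Vm,(True,True,False)) = mkMG (mkcl (0) (0) (0) (((q^6 - q^4 - q^2 + 1) / (q^4))) (0) (0) (0) (0)) (mkcl (((- (q^4) + 1) * cc / (q^2))) (0) (0) (0) (0) (((q^4 - 1) / (q^2))) (0) (0)) (mkcl (0) (0) (0) (0) (0) (0) (((1) / (q^2))) (0))"
  apply (rule trans[OF MG_eta24])
  by (simp add: braid_k_def card_gen sum_lt3 funpow_012 bv_mon bv_gen mkcl_zero mkG_zero power_int_minus_divide wt_mon_def mkMG_eq_iff mkcl_eq_iff; (simp add: field_simps)?; (simp only: s_def)?; (algebra)?)

lemma K1_Vm_7[simp]: "braid_k q wt_gen (EV q) wt_mon (actF q cc) (Vm,(True,True,True)) = mkMG (mkcl (0) (0) (0) (0) (0) (0) (0) (0)) (mkcl (0) (((- (q^4) + 1) * cc / (q^2))) (0) (0) (0) (0) (0) (0)) (mkcl (0) (0) (0) (0) (0) (0) (0) (((1))))"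
  apply (rule trans[OF MG_eta24])
  by (simp add: braid_k_def card_gen sum_lt3 funpow_012 bv_mon bv_gen mkcl_zero mkG_zero power_int_minus_divide wt_mon_def mkMG_eq_iff mkcl_eq_iff; (simp add: field_simps)?; (simp only: s_def)?; (algebra)?)

lemma K2_Vp_0[simp]: "braid_k q wt_mon (actE q cc) wt_gen (FV q) ((False,False,False),Vp) = mkGM (mkcl (((1))) (0) (0) (0) (0) (0) (0) (0)) (mkcl (0) (0) (0) (0) (0) (0) (0) (0)) (mkcl (0) (0) (0) (0) (0) (0) (0) (0))"
  apply (rule trans[OF GM_eta24])
  by (simp add: braid_k_trunc[OF FV3 FV0] card_mon sum_lt3 funpow_012 bv_mon bv_gen mkcl_zero mkG_zero power_int_minus_divide wt_mon_def mkGM_eq_iff mkcl_eq_iff; (simp add: field_simps)?; (simp only: s_def)?; (algebra)?)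

lemma K2_Vp_1[simp]: "braid_k q wt_mon (actE q cc) wt_gen (FV q) ((False,False,True),Vp) = mkGM (mkcl (0) (((1) / (q^2))) (0) (0) (0) (0) (0) (0)) (mkcl (0) (0) (((- (q^2) + 1) / (q))) (0) (0) (0) (0) (0)) (mkcl (0) (0) (0) (0) (((q^6 - q^4 - q^2 + 1) / (q^4))) (0) (0) (0))"
  apply (rule trans[OF GM_eta24])
  by (simp add: braid_k_trunc[OF FV3 FV0] card_mon sum_lt3 funpow_012 bv_mon bv_gen mkcl_zero mkG_zero power_int_minus_divide wt_mon_def mkGM_eq_iff mkcl_eq_iff; (simp add: field_simps)?; (simp only: s_def)?; (algebra)?)

lemma K2_Vp_2[simp]: "braid_k q wt_mon (actE q cc) wt_gen (FV q) ((False,True,False),Vp) = mkGM (mkcl (0) (0) (((1))) (0) (0) (0) (0) (0)) (mkcl (0) (0) (0) (0) (((q^4 - 1) / (q^2))) (0) (0) (0)) (mkcl (0) (0) (0) (0) (0) (0) (0) (0))"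
  apply (rule trans[OF GM_eta24])
  by (simp add: braid_k_trunc[OF FV3 FV0] card_mon sum_lt3 funpow_012 bv_mon bv_gen mkcl_zero mkG_zero power_int_minus_divide wt_mon_def mkGM_eq_iff mkcl_eq_iff; (simp add: field_simps)?; (simp only: s_def)?; (algebra)?)

lemma K2_Vp_3[simp]: "braid_k q wt_mon (actE q cc) wt_gen (FV q) ((False,True,True),Vp) = mkGM (mkcl (0) (0) (0) (((1) / (q^2))) (0) (0) (0) (0)) (mkcl (((- (q^4) + 1) * cc / (q^2))) (0) (0) (0) (0) (((q^4 - 1) / (q^2))) (0) (0)) (mkcl (0) (0) (0) (0) (0) (0) (((q^6 - q^4 - q^2 + 1) / (q^4))) (0))"
  apply (rule trans[OF GM_eta24])
  by (simp add: braid_k_trunc[OF FV3 FV0] card_mon sum_lt3 funpow_012 bv_mon bv_gen mkcl_zero mkG_zero power_int_minus_divide wt_mon_def mkGM_eq_iff mkcl_eq_iff; (simp add: field_simps)?; (simp only: s_def)?; (algebra)?)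

lemma K2_Vp_4[simp]: "braid_k q wt_mon (actE q cc) wt_gen (FV q) ((True,False,False),Vp) = mkGM (mkcl (0) (0) (0) (0) (((q^2))) (0) (0) (0)) (mkcl (0) (0) (0) (0) (0) (0) (0) (0)) (mkcl (0) (0) (0) (0) (0) (0) (0) (0))"
  apply (rule trans[OF GM_eta24])
  by (simp add: braid_k_trunc[OF FV3 FV0] card_mon sum_lt3 funpow_012 bv_mon bv_gen mkcl_zero mkG_zero power_int_minus_divide wt_mon_def mkGM_eq_iff mkcl_eq_iff; (simp add: field_simps)?; (simp only: s_def)?; (algebra)?)

lemma K2_Vp_5[simp]: "braid_k q wt_mon (actE q cc) wt_gen (FV q) ((True,False,True),Vp) = mkGM (mkcl (0) (0) (0) (0) (0) (((1))) (0) (0)) (mkcl (0) (0) (0) (0) (0) (0) (((- (q^2) + 1) / (q))) (0)) (mkcl (0) (0) (0) (0) (0) (0) (0) (0))"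
  apply (rule trans[OF GM_eta24])
  by (simp add: braid_k_trunc[OF FV3 FV0] card_mon sum_lt3 funpow_012 bv_mon bv_gen mkcl_zero mkG_zero power_int_minus_divide wt_mon_def mkGM_eq_iff mkcl_eq_iff; (simp add: field_simps)?; (simp only: s_def)?; (algebra)?)

lemma K2_Vp_6[simp]: "braid_k q wt_mon (actE q cc) wt_gen (FV q) ((True,True,False),Vp) = mkGM (mkcl (0) (0) (0) (0) (0) (0) (((q^2))) (0)) (mkcl (0) (0) (0) (0) (0) (0) (0) (0)) (mkcl (0) (0) (0) (0) (0) (0) (0) (0))"
  apply (rule trans[OF GM_eta24])
  by (simp add: braid_k_trunc[OF FV3 FV0] card_mon sum_lt3 funpow_012 bv_mon bv_gen mkcl_zero mkG_zero power_int_minus_divide wt_mon_def mkGM_eq_iff mkcl_eq_iff; (simp add: field_simps)?; (simp only: s_def)?; (algebra)?)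

lemma K2_Vp_7[simp]: "braid_k q wt_mon (actE q cc) wt_gen (FV q) ((True,True,True),Vp) = mkGM (mkcl (0) (0) (0) (0) (0) (0) (0) (((1)))) (mkcl (0) (0) (0) (0) (((- (q^4) + 1) * cc / (q^2))) (0) (0) (0)) (mkcl (0) (0) (0) (0) (0) (0) (0) (0))"
  apply (rule trans[OF GM_eta24])
  by (simp add: braid_k_trunc[OF FV3 FV0] card_mon sum_lt3 funpow_012 bv_mon bv_gen mkcl_zero mkG_zero power_int_minus_divide wt_mon_def mkGM_eq_iff mkcl_eq_iff; (simp add: field_simps)?; (simp only: s_def)?; (algebra)?)

lemma K2_Vz_0[simp]: "braid_k q wt_mon (actE q cc) wt_gen (FV q) ((False,False,False),Vz) = mkGM (mkcl (0) (0) (0) (0) (0) (0) (0) (0)) (mkcl (((1))) (0) (0) (0) (0) (0) (0) (0)) (mkcl (0) (0) (0) (0) (0) (0) (0) (0))"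
  apply (rule trans[OF GM_eta24])
  by (simp add: braid_k_trunc[OF FV3 FV0] card_mon sum_lt3 funpow_012 bv_mon bv_gen mkcl_zero mkG_zero power_int_minus_divide wt_mon_def mkGM_eq_iff mkcl_eq_iff; (simp add: field_simps)?; (simp only: s_def)?; (algebra)?)

lemma K2_Vz_1[simp]: "braid_k q wt_mon (actE q cc) wt_gen (FV q) ((False,False,True),Vz) = mkGM (mkcl (0) (0) (0) (0) (0) (0) (0) (0)) (mkcl (0) (((1))) (0) (0) (0) (0) (0) (0)) (mkcl (0) (0) (((q^4 - 1) / (q^2))) (0) (0) (0) (0) (0))"
  apply (rule trans[OF GM_eta24])
  by (simp add: braid_k_trunc[OF FV3 FV0] card_mon sum_lt3 funpow_012 bv_mon bv_gen mkcl_zero mkG_zero power_int_minus_divide wt_mon_def mkGM_eq_iff mkcl_eq_iff; (simp add: field_simps)?; (simp only: s_def)?; (algebra)?)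

lemma K2_Vz_2[simp]: "braid_k q wt_mon (actE q cc) wt_gen (FV q) ((False,True,False),Vz) = mkGM (mkcl (0) (0) (0) (0) (0) (0) (0) (0)) (mkcl (0) (0) (((1))) (0) (0) (0) (0) (0)) (mkcl (0) (0) (0) (0) (((- (q^6) - q^4 + q^2 + 1) / (q^5))) (0) (0) (0))"
  apply (rule trans[OF GM_eta24])
  by (simp add: braid_k_trunc[OF FV3 FV0] card_mon sum_lt3 funpow_012 bv_mon bv_gen mkcl_zero mkG_zero power_int_minus_divide wt_mon_def mkGM_eq_iff mkcl_eq_iff; (simp add: field_simps)?; (simp only: s_def)?; (algebra)?)

lemma K2_Vz_3[simp]: "braid_k q wt_mon (actE q cc) wt_gen (FV q) ((False,True,True),Vz) = mkGM (mkcl (0) (0) (0) (0) (0) (0) (0) (0)) (mkcl (0) (0) (0) (((1))) (0) (0) (0) (0)) (mkcl (((q^6 + q^4 - q^2 - 1) * cc / (q^3))) (0) (0) (0) (0) (((- (q^6) - q^4 + q^2 + 1) / (q^3))) (0) (0))"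
  apply (rule trans[OF GM_eta24])
  by (simp add: braid_k_trunc[OF FV3 FV0] card_mon sum_lt3 funpow_012 bv_mon bv_gen mkcl_zero mkG_zero power_int_minus_divide wt_mon_def mkGM_eq_iff mkcl_eq_iff; (simp add: field_simps)?; (simp only: s_def)?; (algebra)?)

lemma K2_Vz_4[simp]: "braid_k q wt_mon (actE q cc) wt_gen (FV q) ((True,False,False),Vz) = mkGM (mkcl (0) (0) (0) (0) (0) (0) (0) (0)) (mkcl (0) (0) (0) (0) (((1))) (0) (0) (0)) (mkcl (0) (0) (0) (0) (0) (0) (0) (0))"
  apply (rule trans[OF GM_eta24])
  by (simp add: braid_k_trunc[OF FV3 FV0] card_mon sum_lt3 funpow_012 bv_mon bv_gen mkcl_zero mkG_zero power_int_minus_divide wt_mon_def mkGM_eq_iff mkcl_eq_iff; (simp add: field_simps)?; (simp only: s_def)?; (algebra)?)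

lemma K2_Vz_5[simp]: "braid_k q wt_mon (actE q cc) wt_gen (FV q) ((True,False,True),Vz) = mkGM (mkcl (0) (0) (0) (0) (0) (0) (0) (0)) (mkcl (0) (0) (0) (0) (0) (((1))) (0) (0)) (mkcl (0) (0) (0) (0) (0) (0) (((q^4 - 1) / (q^4))) (0))"
  apply (rule trans[OF GM_eta24])
  by (simp add: braid_k_trunc[OF FV3 FV0] card_mon sum_lt3 funpow_012 bv_mon bv_gen mkcl_zero mkG_zero power_int_minus_divide wt_mon_def mkGM_eq_iff mkcl_eq_iff; (simp add: field_simps)?; (simp only: s_def)?; (algebra)?)

lemma K2_Vz_6[simp]: "braid_k q wt_mon (actE q cc) wt_gen (FV q) ((True,True,False),Vz) = mkGM (mkcl (0) (0) (0) (0) (0) (0) (0) (0)) (mkcl (0) (0) (0) (0) (0) (0) (((1))) (0)) (mkcl (0) (0) (0) (0) (0) (0) (0) (0))"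
  apply (rule trans[OF GM_eta24])
  by (simp add: braid_k_trunc[OF FV3 FV0] card_mon sum_lt3 funpow_012 bv_mon bv_gen mkcl_zero mkG_zero power_int_minus_divide wt_mon_def mkGM_eq_iff mkcl_eq_iff; (simp add: field_simps)?; (simp only: s_def)?; (algebra)?)

lemma K2_Vz_7[simp]: "braid_k q wt_mon (actE q cc) wt_gen (FV q) ((True,True,True),Vz) = mkGM (mkcl (0) (0) (0) (0) (0) (0) (0) (0)) (mkcl (0) (0) (0) (0) (0) (0) (0) (((1)))) (mkcl (0) (0) (0) (0) (((q^6 + q^4 - q^2 - 1) * cc / (q^5))) (0) (0) (0))"
  apply (rule trans[OF GM_eta24])
  by (simp add: braid_k_trunc[OF FV3 FV0] card_mon sum_lt3 funpow_012 bv_mon bv_gen mkcl_zero mkG_zero power_int_minus_divide wt_mon_def mkGM_eq_iff mkcl_eq_iff; (simp add: field_simps)?; (simp only: s_def)?; (algebra)?)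

lemma K2_Vm_0[simp]: "braid_k q wt_mon (actE q cc) wt_gen (FV q) ((False,False,False),Vm) = mkGM (mkcl (0) (0) (0) (0) (0) (0) (0) (0)) (mkcl (0) (0) (0) (0) (0) (0) (0) (0)) (mkcl (((1))) (0) (0) (0) (0) (0) (0) (0))"
  apply (rule trans[OF GM_eta24])
  by (simp add: braid_k_trunc[OF FV3 FV0] card_mon sum_lt3 funpow_012 bv_mon bv_gen mkcl_zero mkG_zero power_int_minus_divide wt_mon_def mkGM_eq_iff mkcl_eq_iff; (simp add: field_simps)?; (simp only: s_def)?; (algebra)?)

lemma K2_Vm_1[simp]: "braid_k q wt_mon (actE q cc) wt_gen (FV q) ((False,False,True),Vm) = mkGM (mkcl (0) (0) (0) (0) (0) (0) (0) (0)) (mkcl (0) (0) (0) (0) (0) (0) (0) (0)) (mkcl (0) (((q^2))) (0) (0) (0) (0) (0) (0))"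
  apply (rule trans[OF GM_eta24])
  by (simp add: braid_k_trunc[OF FV3 FV0] card_mon sum_lt3 funpow_012 bv_mon bv_gen mkcl_zero mkG_zero power_int_minus_divide wt_mon_def mkGM_eq_iff mkcl_eq_iff; (simp add: field_simps)?; (simp only: s_def)?; (algebra)?)

lemma K2_Vm_2[simp]: "braid_k q wt_mon (actE q cc) wt_gen (FV q) ((False,True,False),Vm) = mkGM (mkcl (0) (0) (0) (0) (0) (0) (0) (0)) (mkcl (0) (0) (0) (0) (0) (0) (0) (0)) (mkcl (0) (0) (((1))) (0) (0) (0) (0) (0))"
  apply (rule trans[OF GM_eta24])
  by (simp add: braid_k_trunc[OF FV3 FV0] card_mon sum_lt3 funpow_012 bv_mon bv_gen mkcl_zero mkG_zero power_int_minus_divide wt_mon_def mkGM_eq_iff mkcl_eq_iff; (simp add: field_simps)?; (simp only: s_def)?; (algebra)?)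

lemma K2_Vm_3[simp]: "braid_k q wt_mon (actE q cc) wt_gen (FV q) ((False,True,True),Vm) = mkGM (mkcl (0) (0) (0) (0) (0) (0) (0) (0)) (mkcl (0) (0) (0) (0) (0) (0) (0) (0)) (mkcl (0) (0) (0) (((q^2))) (0) (0) (0) (0))"
  apply (rule trans[OF GM_eta24])
  by (simp add: braid_k_trunc[OF FV3 FV0] card_mon sum_lt3 funpow_012 bv_mon bv_gen mkcl_zero mkG_zero power_int_minus_divide wt_mon_def mkGM_eq_iff mkcl_eq_iff; (simp add: field_simps)?; (simp only: s_def)?; (algebra)?)

lemma K2_Vm_4[simp]: "braid_k q wt_mon (actE q cc) wt_gen (FV q) ((True,False,False),Vm) = mkGM (mkcl (0) (0) (0) (0) (0) (0) (0) (0)) (mkcl (0) (0) (0) (0) (0) (0) (0) (0)) (mkcl (0) (0) (0) (0) (((1) / (q^2))) (0) (0) (0))"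
  apply (rule trans[OF GM_eta24])
  by (simp add: braid_k_trunc[OF FV3 FV0] card_mon sum_lt3 funpow_012 bv_mon bv_gen mkcl_zero mkG_zero power_int_minus_divide wt_mon_def mkGM_eq_iff mkcl_eq_iff; (simp add: field_simps)?; (simp only: s_def)?; (algebra)?)

lemma K2_Vm_5[simp]: "braid_k q wt_mon (actE q cc) wt_gen (FV q) ((True,False,True),Vm) = mkGM (mkcl (0) (0) (0) (0) (0) (0) (0) (0)) (mkcl (0) (0) (0) (0) (0) (0) (0) (0)) (mkcl (0) (0) (0) (0) (0) (((1))) (0) (0))"
  apply (rule trans[OF GM_eta24])
  by (simp add: braid_k_trunc[OF FV3 FV0] card_mon sum_lt3 funpow_012 bv_mon bv_gen mkcl_zero mkG_zero power_int_minus_divide wt_mon_def mkGM_eq_iff mkcl_eq_iff; (simp add: field_simps)?; (simp only: s_def)?; (algebra)?)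

lemma K2_Vm_6[simp]: "braid_k q wt_mon (actE q cc) wt_gen (FV q) ((True,True,False),Vm) = mkGM (mkcl (0) (0) (0) (0) (0) (0) (0) (0)) (mkcl (0) (0) (0) (0) (0) (0) (0) (0)) (mkcl (0) (0) (0) (0) (0) (0) (((1) / (q^2))) (0))"
  apply (rule trans[OF GM_eta24])
  by (simp add: braid_k_trunc[OF FV3 FV0] card_mon sum_lt3 funpow_012 bv_mon bv_gen mkcl_zero mkG_zero power_int_minus_divide wt_mon_def mkGM_eq_iff mkcl_eq_iff; (simp add: field_simps)?; (simp only: s_def)?; (algebra)?)

lemma K2_Vm_7[simp]: "braid_k q wt_mon (actE q cc) wt_gen (FV q) ((True,True,True),Vm) = mkGM (mkcl (0) (0) (0) (0) (0) (0) (0) (0)) (mkcl (0) (0) (0) (0) (0) (0) (0) (0)) (mkcl (0) (0) (0) (0) (0) (0) (0) (((1))))"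
  apply (rule trans[OF GM_eta24])
  by (simp add: braid_k_trunc[OF FV3 FV0] card_mon sum_lt3 funpow_012 bv_mon bv_gen mkcl_zero mkG_zero power_int_minus_divide wt_mon_def mkGM_eq_iff mkcl_eq_iff; (simp add: field_simps)?; (simp only: s_def)?; (algebra)?)

end


lemma sum_fun_app: "(\<Sum>b\<in>A. f b) x = (\<Sum>b\<in>A. (f b x :: complex))"
  by (induction A rule: infinite_finite_induct) auto

definition pair :: "'a::finite vec \<Rightarrow> 'a vec \<Rightarrow> complex" where
  "pair \<phi> v = (\<Sum>i\<in>UNIV. \<phi> i * v i)"

lemma pair_sc: "pair \<phi> (sc a v) = a * pair \<phi> v"
  by (simp add: pair_def sc_def sum_distrib_left mult.left_commute)

lemma linext_app: "linext f v j = (\<Sum>i\<in>UNIV. v i * f i j)"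
  by (simp add: linext_def)

lemma decomp:
  fixes e :: "'b::finite \<Rightarrow> 'a::finite vec" and phi :: "'b \<Rightarrow> 'a vec"
  assumes span: "\<And>i. (\<Sum>b\<in>UNIV. sc (phi b i) (e b)) = bv i"
  shows "v j = (\<Sum>b\<in>UNIV. pair (phi b) v * e b j)"
proof -
  have s: "(\<Sum>b\<in>UNIV. phi b i * e b j) = bv i j" for i
    using fun_cong[OF span[of i], of j] by (simp add: sum_fun_app sc_def)
  have "(\<Sum>b\<in>UNIV. pair (phi b) v * e b j) = (\<Sum>b\<in>UNIV. \<Sum>i\<in>UNIV. v i * (phi b i * e b j))"
    by (simp add: pair_def sum_distrib_left sum_distrib_right mult_ac)
  also have "\<dots> = (\<Sum>i\<in>UNIV. v i * (\<Sum>b\<in>UNIV. phi b i * e b j))"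
    by (subst sum.swap) (simp add: sum_distrib_left)
  also have "\<dots> = (\<Sum>i\<in>UNIV. v i * bv i j)" by (simp add: s)
  also have "\<dots> = v j"
  proof -
    have "(\<Sum>i\<in>UNIV. v i * bv i j) = (\<Sum>i\<in>UNIV. if i = j then v j else 0)"
      by (rule sum.cong) (auto simp: bv_def)
    then show ?thesis by simp
  qed
  finally show ?thesis by simp
qed

lemma linext_decomp:
  fixes e :: "'b::finite \<Rightarrow> 'a::finite vec" and phi :: "'b \<Rightarrow> 'a vec"
  assumes span: "\<And>i. (\<Sum>b\<in>UNIV. sc (phi b i) (e b)) = bv i"
  shows "linext f v j = (\<Sum>b\<in>UNIV. pair (phi b) v * linext f (e b) j)"
proof -
  have "linext f v j = (\<Sum>i\<in>UNIV. (\<Sum>b\<in>UNIV. pair (phi b) v * e b i) * f i j)"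
    unfolding linext_app by (rule sum.cong) (auto simp: decomp[OF span, symmetric])
  also have "\<dots> = (\<Sum>b\<in>UNIV. \<Sum>i\<in>UNIV. pair (phi b) v * (e b i * f i j))"
    by (simp add: sum_distrib_right mult.assoc) (rule sum.swap)
  also have "\<dots> = (\<Sum>b\<in>UNIV. pair (phi b) v * linext f (e b) j)"
    by (simp add: linext_app sum_distrib_left)
  finally show ?thesis .
qed

lemma inv_sqrt_eq:
  fixes T :: "'a::finite vec \<Rightarrow> 'a vec" and e :: "'b::finite \<Rightarrow> 'a vec" and phi :: "'b \<Rightarrow> 'a vec"
    and \<kappa> :: "'b \<Rightarrow> int"
  assumes inj: "\<And>k k'. q powi (2*k) = q powi (2*k') \<Longrightarrow> k = k'"
    and eig: "\<And>b. T (e b) = sc (q powi (2 * \<kappa> b)) (e b)"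
    and left: "\<And>b v. pair (phi b) (T v) = q powi (2 * \<kappa> b) * pair (phi b) v"
    and span: "\<And>i. (\<Sum>b\<in>UNIV. sc (phi b i) (e b)) = bv i"
  shows "inv_sqrt q T = linext (\<lambda>i. \<Sum>b\<in>UNIV. sc (phi b i * q powi (- \<kappa> b)) (e b))"
proof -
  define S0 where "S0 = linext (\<lambda>i. \<Sum>b\<in>UNIV. sc (phi b i * q powi (- \<kappa> b)) (e b))"
  have G: "S0 v j = (\<Sum>b\<in>UNIV. pair (phi b) v * q powi (- \<kappa> b) * e b j)" for v j
  proof -
    have "S0 v j = (\<Sum>i\<in>UNIV. \<Sum>b\<in>UNIV. v i * (phi b i * q powi (- \<kappa> b) * e b j))"
      by (simp add: S0_def linext_app sum_fun_app sc_def sum_distrib_left)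
    also have "\<dots> = (\<Sum>b\<in>UNIV. \<Sum>i\<in>UNIV. (phi b i * v i) * (q powi (- \<kappa> b) * e b j))"
      by (subst sum.swap) (simp add: mult.commute mult.left_commute)
    also have "\<dots> = (\<Sum>b\<in>UNIV. pair (phi b) v * q powi (- \<kappa> b) * e b j)"
      by (simp add: pair_def sum_distrib_right mult.assoc)
    finally show ?thesis .
  qed
  have P: "S0 v = sc (q powi (- k)) v" if Tv: "T v = sc (q powi (2 * k)) v" for k v
  proof (rule ext)
    fix j
    have c: "pair (phi b) v * q powi (- \<kappa> b) = pair (phi b) v * q powi (- k)" for b
    proof -
      have "q powi (2 * k) * pair (phi b) v = q powi (2 * \<kappa> b) * pair (phi b) v"
        using left[of b v] by (simp add: Tv pair_sc)
      then have "pair (phi b) v = 0 \<or> q powi (2 * k) = q powi (2 * \<kappa> b)" by auto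
      then show ?thesis using inj by auto
    qed
    have "S0 v j = (\<Sum>b\<in>UNIV. q powi (- k) * (pair (phi b) v * e b j))"
      unfolding G by (rule sum.cong) (simp_all add: c mult.commute mult.left_commute)
    also have "\<dots> = q powi (- k) * v j"
      by (simp add: sum_distrib_left[symmetric] decomp[OF span, symmetric])
    finally show "S0 v j = sc (q powi (- k)) v j" by (simp add: sc_def)
  qed
  have U: "S = S0" if hS: "(\<exists>f. S = linext f) \<and>
      (\<forall>k::int. \<forall>v. T v = sc (q powi (2 * k)) v \<longrightarrow> S v = sc (q powi (- k)) v)" for S
  proof (rule ext, rule ext)
    fix v j
    obtain f where f: "S = linext f" using hS by blast
    have Se: "S (e b) = sc (q powi (- \<kappa> b)) (e b)" for b using hS eig by blast
    have "S v j = (\<Sum>b\<in>UNIV. pair (phi b) v * S (e b) j)"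
      unfolding f by (rule linext_decomp[OF span])
    also have "\<dots> = S0 v j" by (simp add: G Se sc_def mult.assoc)
    finally show "S v j = S0 v j" .
  qed
  have "inv_sqrt q T = S0"
    unfolding inv_sqrt_def
  proof (rule the_equality)
    show "(\<exists>f. S0 = linext f) \<and> (\<forall>k::int. \<forall>v. T v = sc (q powi (2 * k)) v \<longrightarrow> S0 v = sc (q powi (- k)) v)"
      using P S0_def by blast
  qed (rule U)
  then show ?thesis by (simp add: S0_def)
qed


locale qc2 = qc +
  fixes u t :: complex
  assumes nr: "\<forall>n::nat. n > 0 \<longrightarrow> q ^ n \<noteq> 1" and u_def: "u = q^4 + 1" and t_def: "t = q^4 + q^2 + 1"

lemma GM_cases_all:
  assumes "\<And>a0 a1 a2 a3 a4 a5 a6 a7 b0 b1 b2 b3 b4 b5 b6 b7 c0 c1 c2 c3 c4 c5 c6 c7.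
     P (mkGM (mkcl a0 a1 a2 a3 a4 a5 a6 a7) (mkcl b0 b1 b2 b3 b4 b5 b6 b7) (mkcl c0 c1 c2 c3 c4 c5 c6 c7))"
  shows "P v"
  by (subst GM_eta24) (rule assms)

lemma bv_GM: "bv (Vp,m) = mkGM (bv m) 0 0" "bv (Vz,m) = mkGM 0 (bv m) 0" "bv (Vm,m) = mkGM 0 0 (bv m)"
  by (rule ext, simp add: bv_def mkGM_def split: prod.split gen.split)+

lemma pair_GM: "pair (mkGM (mkcl a0 a1 a2 a3 a4 a5 a6 a7) (mkcl b0 b1 b2 b3 b4 b5 b6 b7) (mkcl c0 c1 c2 c3 c4 c5 c6 c7))
   (mkGM (mkcl x0 x1 x2 x3 x4 x5 x6 x7) (mkcl y0 y1 y2 y3 y4 y5 y6 y7) (mkcl z0 z1 z2 z3 z4 z5 z6 z7)) =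
   a0*x0 + a1*x1 + a2*x2 + a3*x3 + a4*x4 + a5*x5 + a6*x6 + a7*x7 +
   (b0*y0 + b1*y1 + b2*y2 + b3*y3 + b4*y4 + b5*y5 + b6*y6 + b7*y7) +
   (c0*z0 + c1*z1 + c2*z2 + c3*z3 + c4*z4 + c5*z5 + c6*z6 + c7*z7)"
  by (simp add: pair_def sum_GM sum_mon add.assoc)

context qc2 begin

lemma u0[simp]: "u \<noteq> 0"
proof
  assume "u = 0"
  then have "q^8 - 1 = 0" using u_def by algebra
  then show False using nr by (metis eq_iff_diff_eq_0 zero_less_numeral)
qed

lemma t0[simp]: "t \<noteq> 0"
proof
  assume "t = 0"
  then have "q^6 - 1 = 0" using t_def by algebra
  then show False using nr by (metis eq_iff_diff_eq_0 zero_less_numeral)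
qed

lemma inj_q: "q powi (2*k) = q powi (2*k') \<Longrightarrow> k = k'"
proof -
  have key: "q powi (2*a) \<noteq> q powi (2*b)" if "a < b" for a b :: int
  proof
    assume h: "q powi (2*a) = q powi (2*b)"
    have "q powi (2*b) = q powi (2*a) * q powi (2*(b-a))"
      by (simp add: power_int_add[symmetric] algebra_simps)
    moreover have "q powi (2*a) \<noteq> 0" by simp
    ultimately have "q powi (2*(b-a)) = 1" using h by simp
    moreover have "2*(b-a) = int (nat (2*(b-a)))" using that by simp
    ultimately have "q ^ nat (2*(b-a)) = 1" by (metis power_int_of_nat)
    moreover have "nat (2*(b-a)) > 0" using that by simp
    ultimately show False using nr by blast
  qed
  assume "q powi (2*k) = q powi (2*k')"
  then show "k = k'" using key[of k k'] key[of k' k] by (cases "k < k'"; cases "k' < k") auto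
qed
lemma sVCl_mat[simp]: "sigma_VCl q cc (mkGM (mkcl a0 a1 a2 a3 a4 a5 a6 a7) (mkcl b0 b1 b2 b3 b4 b5 b6 b7) (mkcl c0 c1 c2 c3 c4 c5 c6 c7)) = mkMG (mkcl (a0 * (((1))) + b6 * (((q^6 + q^4 - q^2 - 1) * cc / (q^3)))) (a1 * (((1) / (q^2))) + b2 * (((- (q^6) - q^4 + q^2 + 1) / (q^5))) + b7 * (((q^6 + q^4 - q^2 - 1) * cc / (q^5))) + c4 * (((q^6 - q^4 - q^2 + 1) / (q^4)))) (a2 * (((1))) + b4 * (((q^4 - 1) / (q^2)))) (a3 * (((1) / (q^2))) + b5 * (((q^4 - 1) / (q^4))) + c6 * (((q^6 - q^4 - q^2 + 1) / (q^4)))) (a4 * (((q^2)))) (a5 * (((1))) + b6 * (((- (q^6) - q^4 + q^2 + 1) / (q^3)))) (a6 * (((q^2)))) (a7 * (((1))))) (mkcl (b0 * (((1))) + c6 * (((- (q^4) + 1) * cc / (q^2)))) (b1 * (((1))) + c2 * (((q^4 - 1) / (q^2))) + c7 * (((- (q^4) + 1) * cc / (q^2)))) (b2 * (((1))) + c4 * (((- (q^2) + 1) / (q)))) (b3 * (((1))) + c5 * (((- (q^2) + 1) / (q)))) (b4 * (((1)))) (b5 * (((1))) + c6 * (((q^4 - 1) / (q^2)))) (b6 * (((1)))) (b7 * (((1))))) (mkcl (c0 * (((1)))) (c1 * (((q^2)))) (c2 * (((1)))) (c3 * (((q^2)))) (c4 * (((1) / (q^2)))) (c5 * (((1)))) (c6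 * (((1) / (q^2)))) (c7 * (((1)))))"
  unfolding sigma_VCl_def braid_eq linext_mkGM linext_mkcl
  by (simp add: mkMG_eq_iff mkcl_eq_iff; (simp add: field_simps)?; (simp only: s_def u_def t_def)?; (algebra)?)

lemma sClV_mat[simp]: "sigma_ClV q cc (mkMG (mkcl a0 a1 a2 a3 a4 a5 a6 a7) (mkcl b0 b1 b2 b3 b4 b5 b6 b7) (mkcl c0 c1 c2 c3 c4 c5 c6 c7)) = mkGM (mkcl (a0 * (((1)))) (a1 * (((1) / (q^2)))) (a2 * (((1)))) (a3 * (((1) / (q^2)))) (a4 * (((q^2)))) (a5 * (((1)))) (a6 * (((q^2)))) (a7 * (((1))))) (mkcl (a3 * (((- (q^4) + 1) * cc / (q^2))) + b0 * (((1)))) (b1 * (((1)))) (a1 * (((- (q^2) + 1) / (q))) + b2 * (((1)))) (b3 * (((1)))) (a2 * (((q^4 - 1) / (q^2))) + a7 * (((- (q^4) + 1) * cc / (q^2))) + b4 * (((1)))) (a3 * (((q^4 - 1) / (q^2))) + b5 * (((1)))) (a5 * (((- (q^2) + 1) / (q))) + b6 * (((1)))) (b7 * (((1))))) (mkcl (b3 * (((q^6 + q^4 - q^2 - 1) * cc / (q^3))) + c0 * (((1)))) (c1 * (((q^2)))) (b1 * (((q^4 - 1) / (q^2))) + c2 * (((1)))) (c3 * (((q^2)))) (a1 * (((q^6 - q^4 - q^2 + 1) / (q^4))) + b2 * (((- (q^6) - q^4 + q^2 + 1) / (q^5))) + b7 * (((q^6 + q^4 - q^2 - 1) * cc / (q^5)))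 + c4 * (((1) / (q^2)))) (b3 * (((- (q^6) - q^4 + q^2 + 1) / (q^3))) + c5 * (((1)))) (a3 * (((q^6 - q^4 - q^2 + 1) / (q^4))) + b5 * (((q^4 - 1) / (q^4))) + c6 * (((1) / (q^2)))) (c7 * (((1)))))"
  unfolding sigma_ClV_def braid_eq linext_mkMG linext_mkcl
  by (simp add: mkGM_eq_iff mkcl_eq_iff; (simp add: field_simps)?; (simp only: s_def u_def t_def)?; (algebra)?)

fun eb :: "gen \<times> bool \<times> bool \<times> bool \<Rightarrow> (gen \<times> mon) vec" where
"eb (Vp,False,False,False) = mkGM (mkcl (0) (((q^2))) (0) (0) (0) (0) (0) (0)) (mkcl (0) (0) (((q^3) / (s))) (0) (0) (0) (0) (0)) (mkcl (0) (0) (0) (0) (((1))) (0) (0) (0))"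
| "eb (Vp,False,False,True) = mkGM (mkcl (0) (0) (0) (((q^2))) (0) (0) (0) (0)) (mkcl (((q^2) * cc)) (0) (0) (0) (0) (((- (q^2)))) (0) (0)) (mkcl (0) (0) (0) (0) (0) (0) (((1))) (0))"
| "eb (Vp,False,True,False) = mkGM (mkcl (0) (0) (((- (q^2)))) (0) (0) (0) (0) (0)) (mkcl (0) (0) (0) (0) (((1))) (0) (0) (0)) (mkcl (0) (0) (0) (0) (0) (0) (0) (0))"
| "eb (Vp,False,True,True) = mkGM (mkcl (((- (q^3) - q) * cc)) (0) (0) (0) (0) (((q^3 + q))) (0) (0)) (mkcl (0) (0) (0) (0) (0) (0) (((1))) (0)) (mkcl (0) (0) (0) (0) (0) (0) (0) (0))"
| "eb (Vp,True,False,False) = mkGM (mkcl (0) (0) (0) (0) (0) (0) (0) (0)) (mkcl (0) (((- (q^2)))) (0) (0) (0) (0) (0) (0)) (mkcl (0) (0) (((1))) (0) (0) (0) (0) (0))"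
| "eb (Vp,True,False,True) = mkGM (mkcl (0) (((- (1)))) (0) (0) (0) (0) (0) (0)) (mkcl (0) (0) (((q^3 - q) / (s))) (0) (0) (0) (0) (0)) (mkcl (0) (0) (0) (0) (((1))) (0) (0) (0))"
| "eb (Vp,True,True,False) = mkGM (mkcl (0) (0) (0) (0) (0) (0) (0) (0)) (mkcl (0) (0) (0) (((q^3) / (s))) (0) (0) (0) (0)) (mkcl (((- (1)) * cc)) (0) (0) (0) (0) (((1))) (0) (0))"
| "eb (Vp,True,True,True) = mkGM (mkcl (0) (0) (0) (((- (1)))) (0) (0) (0) (0)) (mkcl (((q^2 - 1) * cc)) (0) (0) (0) (0) (((- (q^2) + 1))) (0) (0)) (mkcl (0) (0) (0) (0) (0) (0) (((1))) (0))"
| "eb (Vz,False,False,False) = mkGM (mkcl (((1))) (0) (0) (0) (0) (0) (0) (0)) (mkcl (0) (0) (0) (0) (0) (0) (0) (0)) (mkcl (0) (0) (0) (0) (0) (0) (0) (0))"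
| "eb (Vz,False,False,True) = mkGM (mkcl (0) (0) (((1) * cc)) (0) (0) (0) (0) (((1)))) (mkcl (0) (0) (0) (0) (0) (0) (0) (0)) (mkcl (0) (0) (0) (0) (0) (0) (0) (0))"
| "eb (Vz,False,True,False) = mkGM (mkcl (0) (0) (0) (0) (0) (0) (0) (0)) (mkcl (((1))) (0) (0) (0) (0) (0) (0) (0)) (mkcl (0) (0) (0) (0) (0) (0) (0) (0))"
| "eb (Vz,False,True,True) = mkGM (mkcl (0) (0) (0) (0) (0) (0) (0) (0)) (mkcl (0) (0) (((1) * cc)) (0) (0) (0) (0) (((1)))) (mkcl (0) (0) (0) (0) (0) (0) (0) (0))"
| "eb (Vz,True,False,False) = mkGM (mkcl (0) (0) (0) (0) (0) (0) (0) (0)) (mkcl (0) (0) (0) (0) (0) (0) (0) (0)) (mkcl (((1))) (0) (0) (0) (0) (0) (0) (0))"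
| "eb (Vz,True,False,True) = mkGM (mkcl (0) (0) (0) (0) (0) (0) (0) (0)) (mkcl (0) (0) (0) (0) (0) (0) (0) (0)) (mkcl (0) (0) (((1) * cc)) (0) (0) (0) (0) (((1))))"
| "eb (Vz,True,True,False) = mkGM (mkcl (0) (0) (0) (0) (((1))) (0) (0) (0)) (mkcl (0) (0) (0) (0) (0) (0) (0) (0)) (mkcl (0) (0) (0) (0) (0) (0) (0) (0))"
| "eb (Vz,True,True,True) = mkGM (mkcl (0) (0) (0) (0) (0) (0) (((1))) (0)) (mkcl (0) (0) (0) (0) (0) (0) (0) (0)) (mkcl (0) (0) (0) (0) (0) (0) (0) (0))"
| "eb (Vm,False,False,False) = mkGM (mkcl (0) (0) (((1) / (q^2))) (0) (0) (0) (0) (0)) (mkcl (0) (0) (0) (0) (((1))) (0) (0) (0)) (mkcl (0) (0) (0) (0) (0) (0) (0) (0))"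
| "eb (Vm,False,False,True) = mkGM (mkcl (((q^2 + 1) * cc / (q^3))) (0) (0) (0) (0) (((- (q^2) - 1) / (q^3))) (0) (0)) (mkcl (0) (0) (0) (0) (0) (0) (((1))) (0)) (mkcl (0) (0) (0) (0) (0) (0) (0) (0))"
| "eb (Vm,False,True,False) = mkGM (mkcl (0) (0) (0) (0) (0) (0) (0) (0)) (mkcl (0) (0) (0) (0) (0) (0) (0) (0)) (mkcl (0) (((1))) (0) (0) (0) (0) (0) (0))"
| "eb (Vm,False,True,True) = mkGM (mkcl (0) (0) (0) (0) (0) (0) (0) (0)) (mkcl (0) (((1) / (q^2))) (0) (0) (0) (0) (0) (0)) (mkcl (0) (0) (((1))) (0) (0) (0) (0) (0))"
| "eb (Vm,True,False,False) = mkGM (mkcl (0) (0) (0) (0) (0) (0) (0) (0)) (mkcl (0) (0) (0) (0) (0) (0) (0) (0)) (mkcl (0) (0) (0) (((1))) (0) (0) (0) (0))"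
| "eb (Vm,True,False,True) = mkGM (mkcl (0) (((1) / (q^4))) (0) (0) (0) (0) (0) (0)) (mkcl (0) (0) (((- (1)) / (q))) (0) (0) (0) (0) (0)) (mkcl (0) (0) (0) (0) (((1))) (0) (0) (0))"
| "eb (Vm,True,True,False) = mkGM (mkcl (0) (0) (0) (0) (0) (0) (0) (0)) (mkcl (0) (0) (0) (((- (1)) / (q * s))) (0) (0) (0) (0)) (mkcl (((- (1)) * cc)) (0) (0) (0) (0) (((1))) (0) (0))"
| "eb (Vm,True,True,True) = mkGM (mkcl (0) (0) (0) (((1) / (q^4))) (0) (0) (0) (0)) (mkcl (((- (q^2) - 1) * cc / (q^2))) (0) (0) (0) (0) (((q^2 + 1) / (q^2))) (0) (0)) (mkcl (0) (0) (0) (0) (0) (0) (((1))) (0))"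
fun phib :: "gen \<times> bool \<times> bool \<times> bool \<Rightarrow> (gen \<times> mon) vec" where
"phib (Vp,False,False,False) = mkGM (mkcl (0) (((q^2) / (t))) (0) (0) (0) (0) (0) (0)) (mkcl (0) (0) (((q^2 + 1) / (q * t))) (0) (0) (0) (0) (((- (q^2) - 1) * cc / (q * t)))) (mkcl (0) (0) (0) (0) (((1) / (t))) (0) (0) (0))"
| "phib (Vp,False,False,True) = mkGM (mkcl (0) (0) (0) (((q^2) / (t))) (0) (0) (0) (0)) (mkcl (0) (0) (0) (0) (0) (((- (1)) / (t))) (0) (0)) (mkcl (0) (0) (0) (0) (0) (0) (((1) / (t))) (0))"
| "phib (Vp,False,True,False) = mkGM (mkcl (0) (0) (((- (q^2)) / (u))) (0) (0) (0) (0) (((q^2) * cc / (u)))) (mkcl (0) (0) (0) (0) (((1) / (u))) (0) (0) (0)) (mkcl (0) (0) (0) (0) (0) (0) (0) (0))"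
| "phib (Vp,False,True,True) = mkGM (mkcl (0) (0) (0) (0) (0) (((q^3) / (u * s))) (0) (0)) (mkcl (0) (0) (0) (0) (0) (0) (((1) / (u))) (0)) (mkcl (0) (0) (0) (0) (0) (0) (0) (0))"
| "phib (Vp,True,False,False) = mkGM (mkcl (0) (0) (0) (0) (0) (0) (0) (0)) (mkcl (0) (((- (q^2)) / (u))) (0) (0) (0) (0) (0) (0)) (mkcl (0) (0) (((1) / (u))) (0) (0) (0) (0) (((- (1)) * cc / (u))))"
| "phib (Vp,True,False,True) = mkGM (mkcl (0) (((- (q^2)) / (u))) (0) (0) (0) (0) (0) (0)) (mkcl (0) (0) (((q^4 - 1) / (q * u))) (0) (0) (0) (0) (((- (q^4) + 1) * cc / (q * u)))) (mkcl (0) (0) (0) (0) (((q^2) / (u))) (0) (0) (0))"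
| "phib (Vp,True,True,False) = mkGM (mkcl (0) (0) (0) (0) (0) (0) (0) (0)) (mkcl (0) (0) (0) (((q^3 + q) / (u))) (0) (0) (0) (0)) (mkcl (0) (0) (0) (0) (0) (((1) / (u))) (0) (0))"
| "phib (Vp,True,True,True) = mkGM (mkcl (0) (0) (0) (((- (q^2)) / (u))) (0) (0) (0) (0)) (mkcl (0) (0) (0) (0) (0) (((- (q^2) + 1) / (u))) (0) (0)) (mkcl (0) (0) (0) (0) (0) (0) (((q^2) / (u))) (0))"
| "phib (Vz,False,False,False) = mkGM (mkcl (((1))) (0) (0) (0) (0) (((1) * cc)) (0) (0)) (mkcl (0) (0) (0) (0) (0) (0) (0) (0)) (mkcl (0) (0) (0) (0) (0) (0) (0) (0))"
| "phib (Vz,False,False,True) = mkGM (mkcl (0) (0) (0) (0) (0) (0) (0) (((1)))) (mkcl (0) (0) (0) (0) (0) (0) (0) (0)) (mkcl (0) (0) (0) (0) (0) (0) (0) (0))"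
| "phib (Vz,False,True,False) = mkGM (mkcl (0) (0) (0) (0) (0) (0) (0) (0)) (mkcl (((1))) (0) (0) (0) (0) (((1) * cc)) (0) (0)) (mkcl (0) (0) (0) (0) (0) (0) (0) (0))"
| "phib (Vz,False,True,True) = mkGM (mkcl (0) (0) (0) (0) (0) (0) (0) (0)) (mkcl (0) (0) (0) (0) (0) (0) (0) (((1)))) (mkcl (0) (0) (0) (0) (0) (0) (0) (0))"
| "phib (Vz,True,False,False) = mkGM (mkcl (0) (0) (0) (0) (0) (0) (0) (0)) (mkcl (0) (0) (0) (0) (0) (0) (0) (0)) (mkcl (((1))) (0) (0) (0) (0) (((1) * cc)) (0) (0))"
| "phib (Vz,True,False,True) = mkGM (mkcl (0) (0) (0) (0) (0) (0) (0) (0)) (mkcl (0) (0) (0) (0) (0) (0) (0) (0)) (mkcl (0) (0) (0) (0) (0) (0) (0) (((1))))"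
| "phib (Vz,True,True,False) = mkGM (mkcl (0) (0) (0) (0) (((1))) (0) (0) (0)) (mkcl (0) (0) (0) (0) (0) (0) (0) (0)) (mkcl (0) (0) (0) (0) (0) (0) (0) (0))"
| "phib (Vz,True,True,True) = mkGM (mkcl (0) (0) (0) (0) (0) (0) (((1))) (0)) (mkcl (0) (0) (0) (0) (0) (0) (0) (0)) (mkcl (0) (0) (0) (0) (0) (0) (0) (0))"
| "phib (Vm,False,False,False) = mkGM (mkcl (0) (0) (((q^2) / (u))) (0) (0) (0) (0) (((- (q^2)) * cc / (u)))) (mkcl (0) (0) (0) (0) (((q^4) / (u))) (0) (0) (0)) (mkcl (0) (0) (0) (0) (0) (0) (0) (0))"
| "phib (Vm,False,False,True) = mkGM (mkcl (0) (0) (0) (0) (0) (((- (q^3)) / (u * s))) (0) (0)) (mkcl (0) (0) (0) (0) (0) (0) (((q^4) / (u))) (0)) (mkcl (0) (0) (0) (0) (0) (0) (0) (0))"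
| "phib (Vm,False,True,False) = mkGM (mkcl (0) (0) (0) (0) (0) (0) (0) (0)) (mkcl (0) (0) (0) (0) (0) (0) (0) (0)) (mkcl (0) (((1))) (0) (0) (0) (0) (0) (0))"
| "phib (Vm,False,True,True) = mkGM (mkcl (0) (0) (0) (0) (0) (0) (0) (0)) (mkcl (0) (((q^2) / (u))) (0) (0) (0) (0) (0) (0)) (mkcl (0) (0) (((q^4) / (u))) (0) (0) (0) (0) (((- (q^4)) * cc / (u))))"
| "phib (Vm,True,False,False) = mkGM (mkcl (0) (0) (0) (0) (0) (0) (0) (0)) (mkcl (0) (0) (0) (0) (0) (0) (0) (0)) (mkcl (0) (0) (0) (((1))) (0) (0) (0) (0))"
| "phib (Vm,True,False,True) = mkGM (mkcl (0) (((q^4) / (u * t))) (0) (0) (0) (0) (0) (0)) (mkcl (0) (0) (((- (q^7) - 2*q^5 - q^3) / (u * t))) (0) (0) (0) (0) (((q^7 + 2*q^5 + q^3) * cc / (u * t)))) (mkcl (0) (0) (0) (0) (((q^8) / (u * t))) (0) (0) (0))"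
| "phib (Vm,True,True,False) = mkGM (mkcl (0) (0) (0) (0) (0) (0) (0) (0)) (mkcl (0) (0) (0) (((- (q^3) - q) / (u))) (0) (0) (0) (0)) (mkcl (0) (0) (0) (0) (0) (((q^4) / (u))) (0) (0))"
| "phib (Vm,True,True,True) = mkGM (mkcl (0) (0) (0) (((q^4) / (u * t))) (0) (0) (0) (0)) (mkcl (0) (0) (0) (0) (0) (((q^6 + q^4) / (u * t))) (0) (0)) (mkcl (0) (0) (0) (0) (0) (0) (((q^8) / (u * t))) (0))"
fun kap :: "gen \<times> bool \<times> bool \<times> bool \<Rightarrow> int" where
"kap (Vp,False,False,False) = -4"
| "kap (Vp,False,False,True) = -4"
| "kap (Vp,False,True,False) = -2"
| "kap (Vp,False,True,True) = -2"
| "kap (Vp,True,False,False) = -2"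
| "kap (Vp,True,False,True) = -2"
| "kap (Vp,True,True,False) = -2"
| "kap (Vp,True,True,True) = -2"
| "kap (Vz,False,False,False) = 0"
| "kap (Vz,False,False,True) = 0"
| "kap (Vz,False,True,False) = 0"
| "kap (Vz,False,True,True) = 0"
| "kap (Vz,True,False,False) = 0"
| "kap (Vz,True,False,True) = 0"
| "kap (Vz,True,True,False) = 2"
| "kap (Vz,True,True,True) = 2"
| "kap (Vm,False,False,False) = 2"
| "kap (Vm,False,False,True) = 2"
| "kap (Vm,False,True,False) = 2"
| "kap (Vm,False,True,True) = 2"
| "kap (Vm,True,False,False) = 2"
| "kap (Vm,True,False,True) = 2"
| "kap (Vm,True,True,False) = 2"
| "kap (Vm,True,True,True) = 2"
lemma eig_0: "sigma_ClV q cc (sigma_VCl q cc (eb (Vp,False,False,False))) = sc (q powi (2 * kap (Vp,False,False,False))) (eb (Vp,False,False,False))"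
  by (simp add: power_int_minus_divide mkGM_eq_iff mkcl_eq_iff; (simp add: field_simps)?; (simp only: s_def u_def t_def)?; (algebra)?)

lemma left_0: "pair (phib (Vp,False,False,False)) (sigma_ClV q cc (sigma_VCl q cc v)) = q powi (2 * kap (Vp,False,False,False)) * pair (phib (Vp,False,False,False)) v"
  apply (rule GM_cases_all[where P="\<lambda>v. pair (phib (Vp,False,False,False)) (sigma_ClV q cc (sigma_VCl q cc v)) = q powi (2 * kap (Vp,False,False,False)) * pair (phib (Vp,False,False,False)) v"])
  by (simp add: power_int_minus_divide pair_GM; (simp add: field_simps)?; (simp only: s_def u_def t_def)?; (algebra)?)

lemma span_0: "(\<Sum>b\<in>UNIV. sc (phib b (Vp,False,False,False)) (eb b)) = bv (Vp,False,False,False)"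
  by (simp add: sum_GM sum_mon bv_GM bv_mon mkcl_zero mkGM_eq_iff mkcl_eq_iff; (simp add: field_simps)?; (simp only: s_def u_def t_def)?; (algebra)?)

lemma s0_0[simp]: "(\<Sum>b\<in>UNIV. sc (phib b (Vp,False,False,False) * q powi (- kap b)) (eb b)) = mkGM (mkcl (((1))) (0) (0) (0) (0) (0) (0) (0)) (mkcl (0) (0) (0) (0) (0) (0) (0) (0)) (mkcl (0) (0) (0) (0) (0) (0) (0) (0))"
  by (simp add: sum_GM sum_mon power_int_minus_divide mkGM_eq_iff mkcl_eq_iff; (simp add: field_simps)?; (simp only: s_def u_def t_def)?; (algebra)?)

lemma eig_1: "sigma_ClV q cc (sigma_VCl q cc (eb (Vp,False,False,True))) = sc (q powi (2 * kap (Vp,False,False,True))) (eb (Vp,False,False,True))"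
  by (simp add: power_int_minus_divide mkGM_eq_iff mkcl_eq_iff; (simp add: field_simps)?; (simp only: s_def u_def t_def)?; (algebra)?)

lemma left_1: "pair (phib (Vp,False,False,True)) (sigma_ClV q cc (sigma_VCl q cc v)) = q powi (2 * kap (Vp,False,False,True)) * pair (phib (Vp,False,False,True)) v"
  apply (rule GM_cases_all[where P="\<lambda>v. pair (phib (Vp,False,False,True)) (sigma_ClV q cc (sigma_VCl q cc v)) = q powi (2 * kap (Vp,False,False,True)) * pair (phib (Vp,False,False,True)) v"])
  by (simp add: power_int_minus_divide pair_GM; (simp add: field_simps)?; (simp only: s_def u_def t_def)?; (algebra)?)

lemma span_1: "(\<Sum>b\<in>UNIV. sc (phib b (Vp,False,False,True)) (eb b)) = bv (Vp,False,False,True)"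
  by (simp add: sum_GM sum_mon bv_GM bv_mon mkcl_zero mkGM_eq_iff mkcl_eq_iff; (simp add: field_simps)?; (simp only: s_def u_def t_def)?; (algebra)?)

lemma s0_1[simp]: "(\<Sum>b\<in>UNIV. sc (phib b (Vp,False,False,True) * q powi (- kap b)) (eb b)) = mkGM (mkcl (0) (((q^10 - q^8 + 2*q^6 - q^2 + 1) / (q^2 * u))) (0) (0) (0) (0) (0) (0)) (mkcl (0) (0) (((q^9 - 2*q^7 + 2*q^5 - q) / (u * s))) (0) (0) (0) (0) (0)) (mkcl (0) (0) (0) (0) (((q^6 - 2*q^4 + q^2) / (u))) (0) (0) (0))"
  by (simp add: sum_GM sum_mon power_int_minus_divide mkGM_eq_iff mkcl_eq_iff; (simp add: field_simps)?; (simp only: s_def u_def t_def)?; (algebra)?)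

lemma eig_2: "sigma_ClV q cc (sigma_VCl q cc (eb (Vp,False,True,False))) = sc (q powi (2 * kap (Vp,False,True,False))) (eb (Vp,False,True,False))"
  by (simp add: power_int_minus_divide mkGM_eq_iff mkcl_eq_iff; (simp add: field_simps)?; (simp only: s_def u_def t_def)?; (algebra)?)

lemma left_2: "pair (phib (Vp,False,True,False)) (sigma_ClV q cc (sigma_VCl q cc v)) = q powi (2 * kap (Vp,False,True,False)) * pair (phib (Vp,False,True,False)) v"
  apply (rule GM_cases_all[where P="\<lambda>v. pair (phib (Vp,False,True,False)) (sigma_ClV q cc (sigma_VCl q cc v)) = q powi (2 * kap (Vp,False,True,False)) * pair (phib (Vp,False,True,False)) v"])
  by (simp add: power_int_minus_divide pair_GM; (simp add: field_simps)?; (simp only: s_def u_def t_def)?; (algebra)?)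

lemma span_2: "(\<Sum>b\<in>UNIV. sc (phib b (Vp,False,True,False)) (eb b)) = bv (Vp,False,True,False)"
  by (simp add: sum_GM sum_mon bv_GM bv_mon mkcl_zero mkGM_eq_iff mkcl_eq_iff; (simp add: field_simps)?; (simp only: s_def u_def t_def)?; (algebra)?)

lemma s0_2[simp]: "(\<Sum>b\<in>UNIV. sc (phib b (Vp,False,True,False) * q powi (- kap b)) (eb b)) = mkGM (mkcl (0) (0) (((q^8 + 1) / (q^2 * u))) (0) (0) (0) (0) (0)) (mkcl (0) (0) (0) (0) (((- (q^4) + 1) / (u))) (0) (0) (0)) (mkcl (0) (0) (0) (0) (0) (0) (0) (0))"
  by (simp add: sum_GM sum_mon power_int_minus_divide mkGM_eq_iff mkcl_eq_iff; (simp add: field_simps)?; (simp only: s_def u_def t_def)?; (algebra)?)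

lemma eig_3: "sigma_ClV q cc (sigma_VCl q cc (eb (Vp,False,True,True))) = sc (q powi (2 * kap (Vp,False,True,True))) (eb (Vp,False,True,True))"
  by (simp add: power_int_minus_divide mkGM_eq_iff mkcl_eq_iff; (simp add: field_simps)?; (simp only: s_def u_def t_def)?; (algebra)?)

lemma left_3: "pair (phib (Vp,False,True,True)) (sigma_ClV q cc (sigma_VCl q cc v)) = q powi (2 * kap (Vp,False,True,True)) * pair (phib (Vp,False,True,True)) v"
  apply (rule GM_cases_all[where P="\<lambda>v. pair (phib (Vp,False,True,True)) (sigma_ClV q cc (sigma_VCl q cc v)) = q powi (2 * kap (Vp,False,True,True)) * pair (phib (Vp,False,True,True)) v"])
  by (simp add: power_int_minus_divide pair_GM; (simp add: field_simps)?; (simp only: s_def u_def t_def)?; (algebra)?)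

lemma span_3: "(\<Sum>b\<in>UNIV. sc (phib b (Vp,False,True,True)) (eb b)) = bv (Vp,False,True,True)"
  by (simp add: sum_GM sum_mon bv_GM bv_mon mkcl_zero mkGM_eq_iff mkcl_eq_iff; (simp add: field_simps)?; (simp only: s_def u_def t_def)?; (algebra)?)

lemma s0_3[simp]: "(\<Sum>b\<in>UNIV. sc (phib b (Vp,False,True,True) * q powi (- kap b)) (eb b)) = mkGM (mkcl (0) (0) (0) (((q^10 - q^8 + 2*q^6 - q^2 + 1) / (q^2 * u))) (0) (0) (0) (0)) (mkcl (((q^8 - 2*q^6 + 2*q^4 - 1) * cc / (u))) (0) (0) (0) (0) (((- (q^8) + 2*q^6 - 2*q^4 + 1) / (u))) (0) (0)) (mkcl (0) (0) (0) (0) (0) (0) (((q^6 - 2*q^4 + q^2) / (u))) (0))"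
  by (simp add: sum_GM sum_mon power_int_minus_divide mkGM_eq_iff mkcl_eq_iff; (simp add: field_simps)?; (simp only: s_def u_def t_def)?; (algebra)?)

lemma eig_4: "sigma_ClV q cc (sigma_VCl q cc (eb (Vp,True,False,False))) = sc (q powi (2 * kap (Vp,True,False,False))) (eb (Vp,True,False,False))"
  by (simp add: power_int_minus_divide mkGM_eq_iff mkcl_eq_iff; (simp add: field_simps)?; (simp only: s_def u_def t_def)?; (algebra)?)

lemma left_4: "pair (phib (Vp,True,False,False)) (sigma_ClV q cc (sigma_VCl q cc v)) = q powi (2 * kap (Vp,True,False,False)) * pair (phib (Vp,True,False,False)) v"
  apply (rule GM_cases_all[where P="\<lambda>v. pair (phib (Vp,True,False,False)) (sigma_ClV q cc (sigma_VCl q cc v)) = q powi (2 * kap (Vp,True,False,False)) * pair (phib (Vp,True,False,False)) v"])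
  by (simp add: power_int_minus_divide pair_GM; (simp add: field_simps)?; (simp only: s_def u_def t_def)?; (algebra)?)

lemma span_4: "(\<Sum>b\<in>UNIV. sc (phib b (Vp,True,False,False)) (eb b)) = bv (Vp,True,False,False)"
  by (simp add: sum_GM sum_mon bv_GM bv_mon mkcl_zero mkGM_eq_iff mkcl_eq_iff; (simp add: field_simps)?; (simp only: s_def u_def t_def)?; (algebra)?)

lemma s0_4[simp]: "(\<Sum>b\<in>UNIV. sc (phib b (Vp,True,False,False) * q powi (- kap b)) (eb b)) = mkGM (mkcl (0) (0) (0) (0) (((1) / (q^2))) (0) (0) (0)) (mkcl (0) (0) (0) (0) (0) (0) (0) (0)) (mkcl (0) (0) (0) (0) (0) (0) (0) (0))"
  by (simp add: sum_GM sum_mon power_int_minus_divide mkGM_eq_iff mkcl_eq_iff; (simp add: field_simps)?; (simp only: s_def u_def t_def)?; (algebra)?)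

lemma eig_5: "sigma_ClV q cc (sigma_VCl q cc (eb (Vp,True,False,True))) = sc (q powi (2 * kap (Vp,True,False,True))) (eb (Vp,True,False,True))"
  by (simp add: power_int_minus_divide mkGM_eq_iff mkcl_eq_iff; (simp add: field_simps)?; (simp only: s_def u_def t_def)?; (algebra)?)

lemma left_5: "pair (phib (Vp,True,False,True)) (sigma_ClV q cc (sigma_VCl q cc v)) = q powi (2 * kap (Vp,True,False,True)) * pair (phib (Vp,True,False,True)) v"
  apply (rule GM_cases_all[where P="\<lambda>v. pair (phib (Vp,True,False,True)) (sigma_ClV q cc (sigma_VCl q cc v)) = q powi (2 * kap (Vp,True,False,True)) * pair (phib (Vp,True,False,True)) v"])
  by (simp add: power_int_minus_divide pair_GM; (simp add: field_simps)?; (simp only: s_def u_def t_def)?; (algebra)?)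

lemma span_5: "(\<Sum>b\<in>UNIV. sc (phib b (Vp,True,False,True)) (eb b)) = bv (Vp,True,False,True)"
  by (simp add: sum_GM sum_mon bv_GM bv_mon mkcl_zero mkGM_eq_iff mkcl_eq_iff; (simp add: field_simps)?; (simp only: s_def u_def t_def)?; (algebra)?)

lemma s0_5[simp]: "(\<Sum>b\<in>UNIV. sc (phib b (Vp,True,False,True) * q powi (- kap b)) (eb b)) = mkGM (mkcl (((- (q^8) + q^6 + q^2 - 1) * cc / (q^2 * u))) (0) (0) (0) (0) (((q^8 + 1) / (q^2 * u))) (0) (0)) (mkcl (0) (0) (0) (0) (0) (0) (((q^3 - q) / (u))) (0)) (mkcl (0) (0) (0) (0) (0) (0) (0) (0))"
  by (simp add: sum_GM sum_mon power_int_minus_divide mkGM_eq_iff mkcl_eq_iff; (simp add: field_simps)?; (simp only: s_def u_def t_def)?; (algebra)?)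

lemma eig_6: "sigma_ClV q cc (sigma_VCl q cc (eb (Vp,True,True,False))) = sc (q powi (2 * kap (Vp,True,True,False))) (eb (Vp,True,True,False))"
  by (simp add: power_int_minus_divide mkGM_eq_iff mkcl_eq_iff; (simp add: field_simps)?; (simp only: s_def u_def t_def)?; (algebra)?)

lemma left_6: "pair (phib (Vp,True,True,False)) (sigma_ClV q cc (sigma_VCl q cc v)) = q powi (2 * kap (Vp,True,True,False)) * pair (phib (Vp,True,True,False)) v"
  apply (rule GM_cases_all[where P="\<lambda>v. pair (phib (Vp,True,True,False)) (sigma_ClV q cc (sigma_VCl q cc v)) = q powi (2 * kap (Vp,True,True,False)) * pair (phib (Vp,True,True,False)) v"])
  by (simp add: power_int_minus_divide pair_GM; (simp add: field_simps)?; (simp only: s_def u_def t_def)?; (algebra)?)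

lemma span_6: "(\<Sum>b\<in>UNIV. sc (phib b (Vp,True,True,False)) (eb b)) = bv (Vp,True,True,False)"
  by (simp add: sum_GM sum_mon bv_GM bv_mon mkcl_zero mkGM_eq_iff mkcl_eq_iff; (simp add: field_simps)?; (simp only: s_def u_def t_def)?; (algebra)?)

lemma s0_6[simp]: "(\<Sum>b\<in>UNIV. sc (phib b (Vp,True,True,False) * q powi (- kap b)) (eb b)) = mkGM (mkcl (0) (0) (0) (0) (0) (0) (((1) / (q^2))) (0)) (mkcl (0) (0) (0) (0) (0) (0) (0) (0)) (mkcl (0) (0) (0) (0) (0) (0) (0) (0))"
  by (simp add: sum_GM sum_mon power_int_minus_divide mkGM_eq_iff mkcl_eq_iff; (simp add: field_simps)?; (simp only: s_def u_def t_def)?; (algebra)?)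

lemma eig_7: "sigma_ClV q cc (sigma_VCl q cc (eb (Vp,True,True,True))) = sc (q powi (2 * kap (Vp,True,True,True))) (eb (Vp,True,True,True))"
  by (simp add: power_int_minus_divide mkGM_eq_iff mkcl_eq_iff; (simp add: field_simps)?; (simp only: s_def u_def t_def)?; (algebra)?)

lemma left_7: "pair (phib (Vp,True,True,True)) (sigma_ClV q cc (sigma_VCl q cc v)) = q powi (2 * kap (Vp,True,True,True)) * pair (phib (Vp,True,True,True)) v"
  apply (rule GM_cases_all[where P="\<lambda>v. pair (phib (Vp,True,True,True)) (sigma_ClV q cc (sigma_VCl q cc v)) = q powi (2 * kap (Vp,True,True,True)) * pair (phib (Vp,True,True,True)) v"])
  by (simp add: power_int_minus_divide pair_GM; (simp add: field_simps)?; (simp only: s_def u_def t_def)?; (algebra)?)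

lemma span_7: "(\<Sum>b\<in>UNIV. sc (phib b (Vp,True,True,True)) (eb b)) = bv (Vp,True,True,True)"
  by (simp add: sum_GM sum_mon bv_GM bv_mon mkcl_zero mkGM_eq_iff mkcl_eq_iff; (simp add: field_simps)?; (simp only: s_def u_def t_def)?; (algebra)?)

lemma s0_7[simp]: "(\<Sum>b\<in>UNIV. sc (phib b (Vp,True,True,True) * q powi (- kap b)) (eb b)) = mkGM (mkcl (0) (0) (((- (q^8) + q^6 + q^2 - 1) * cc / (q^2 * u))) (0) (0) (0) (0) (((1)))) (mkcl (0) (0) (0) (0) (((q^4 - 1) * cc / (u))) (0) (0) (0)) (mkcl (0) (0) (0) (0) (0) (0) (0) (0))"
  by (simp add: sum_GM sum_mon power_int_minus_divide mkGM_eq_iff mkcl_eq_iff; (simp add: field_simps)?; (simp only: s_def u_def t_def)?; (algebra)?)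

lemma eig_8: "sigma_ClV q cc (sigma_VCl q cc (eb (Vz,False,False,False))) = sc (q powi (2 * kap (Vz,False,False,False))) (eb (Vz,False,False,False))"
  by (simp add: power_int_minus_divide mkGM_eq_iff mkcl_eq_iff; (simp add: field_simps)?; (simp only: s_def u_def t_def)?; (algebra)?)

lemma left_8: "pair (phib (Vz,False,False,False)) (sigma_ClV q cc (sigma_VCl q cc v)) = q powi (2 * kap (Vz,False,False,False)) * pair (phib (Vz,False,False,False)) v"
  apply (rule GM_cases_all[where P="\<lambda>v. pair (phib (Vz,False,False,False)) (sigma_ClV q cc (sigma_VCl q cc v)) = q powi (2 * kap (Vz,False,False,False)) * pair (phib (Vz,False,False,False)) v"])
  by (simp add: power_int_minus_divide pair_GM; (simp add: field_simps)?; (simp only: s_def u_def t_def)?; (algebra)?)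

lemma span_8: "(\<Sum>b\<in>UNIV. sc (phib b (Vz,False,False,False)) (eb b)) = bv (Vz,False,False,False)"
  by (simp add: sum_GM sum_mon bv_GM bv_mon mkcl_zero mkGM_eq_iff mkcl_eq_iff; (simp add: field_simps)?; (simp only: s_def u_def t_def)?; (algebra)?)

lemma s0_8[simp]: "(\<Sum>b\<in>UNIV. sc (phib b (Vz,False,False,False) * q powi (- kap b)) (eb b)) = mkGM (mkcl (0) (0) (0) (0) (0) (0) (0) (0)) (mkcl (((1))) (0) (0) (0) (0) (0) (0) (0)) (mkcl (0) (0) (0) (0) (0) (0) (0) (0))"
  by (simp add: sum_GM sum_mon power_int_minus_divide mkGM_eq_iff mkcl_eq_iff; (simp add: field_simps)?; (simp only: s_def u_def t_def)?; (algebra)?)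

lemma eig_9: "sigma_ClV q cc (sigma_VCl q cc (eb (Vz,False,False,True))) = sc (q powi (2 * kap (Vz,False,False,True))) (eb (Vz,False,False,True))"
  by (simp add: power_int_minus_divide mkGM_eq_iff mkcl_eq_iff; (simp add: field_simps)?; (simp only: s_def u_def t_def)?; (algebra)?)

lemma left_9: "pair (phib (Vz,False,False,True)) (sigma_ClV q cc (sigma_VCl q cc v)) = q powi (2 * kap (Vz,False,False,True)) * pair (phib (Vz,False,False,True)) v"
  apply (rule GM_cases_all[where P="\<lambda>v. pair (phib (Vz,False,False,True)) (sigma_ClV q cc (sigma_VCl q cc v)) = q powi (2 * kap (Vz,False,False,True)) * pair (phib (Vz,False,False,True)) v"])
  by (simp add: power_int_minus_divide pair_GM; (simp add: field_simps)?; (simp only: s_def u_def t_def)?; (algebra)?)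

lemma span_9: "(\<Sum>b\<in>UNIV. sc (phib b (Vz,False,False,True)) (eb b)) = bv (Vz,False,False,True)"
  by (simp add: sum_GM sum_mon bv_GM bv_mon mkcl_zero mkGM_eq_iff mkcl_eq_iff; (simp add: field_simps)?; (simp only: s_def u_def t_def)?; (algebra)?)

lemma s0_9[simp]: "(\<Sum>b\<in>UNIV. sc (phib b (Vz,False,False,True) * q powi (- kap b)) (eb b)) = mkGM (mkcl (0) (0) (0) (0) (0) (0) (0) (0)) (mkcl (0) (((q^8 + 1) / (q^2 * u))) (0) (0) (0) (0) (0) (0)) (mkcl (0) (0) (((- (q^4) + 1) / (u))) (0) (0) (0) (0) (0))"
  by (simp add: sum_GM sum_mon power_int_minus_divide mkGM_eq_iff mkcl_eq_iff; (simp add: field_simps)?; (simp only: s_def u_def t_def)?; (algebra)?)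

lemma eig_10: "sigma_ClV q cc (sigma_VCl q cc (eb (Vz,False,True,False))) = sc (q powi (2 * kap (Vz,False,True,False))) (eb (Vz,False,True,False))"
  by (simp add: power_int_minus_divide mkGM_eq_iff mkcl_eq_iff; (simp add: field_simps)?; (simp only: s_def u_def t_def)?; (algebra)?)

lemma left_10: "pair (phib (Vz,False,True,False)) (sigma_ClV q cc (sigma_VCl q cc v)) = q powi (2 * kap (Vz,False,True,False)) * pair (phib (Vz,False,True,False)) v"
  apply (rule GM_cases_all[where P="\<lambda>v. pair (phib (Vz,False,True,False)) (sigma_ClV q cc (sigma_VCl q cc v)) = q powi (2 * kap (Vz,False,True,False)) * pair (phib (Vz,False,True,False)) v"])
  by (simp add: power_int_minus_divide pair_GM; (simp add: field_simps)?; (simp only: s_def u_def t_def)?; (algebra)?)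

lemma span_10: "(\<Sum>b\<in>UNIV. sc (phib b (Vz,False,True,False)) (eb b)) = bv (Vz,False,True,False)"
  by (simp add: sum_GM sum_mon bv_GM bv_mon mkcl_zero mkGM_eq_iff mkcl_eq_iff; (simp add: field_simps)?; (simp only: s_def u_def t_def)?; (algebra)?)

lemma s0_10[simp]: "(\<Sum>b\<in>UNIV. sc (phib b (Vz,False,True,False) * q powi (- kap b)) (eb b)) = mkGM (mkcl (0) (((q^10 - q^8 + 2*q^4 - q^2 - 1) / (q^3 * u))) (0) (0) (0) (0) (0) (0)) (mkcl (0) (0) (((2*q^6 - 3*q^4 + 2*q^2 + 1) / (u))) (0) (0) (0) (0) (0)) (mkcl (0) (0) (0) (0) (((2*q^5 - 2*q) / (u))) (0) (0) (0))"
  by (simp add: sum_GM sum_mon power_int_minus_divide mkGM_eq_iff mkcl_eq_iff; (simp add: field_simps)?; (simp only: s_def u_def t_def)?; (algebra)?)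

lemma eig_11: "sigma_ClV q cc (sigma_VCl q cc (eb (Vz,False,True,True))) = sc (q powi (2 * kap (Vz,False,True,True))) (eb (Vz,False,True,True))"
  by (simp add: power_int_minus_divide mkGM_eq_iff mkcl_eq_iff; (simp add: field_simps)?; (simp only: s_def u_def t_def)?; (algebra)?)

lemma left_11: "pair (phib (Vz,False,True,True)) (sigma_ClV q cc (sigma_VCl q cc v)) = q powi (2 * kap (Vz,False,True,True)) * pair (phib (Vz,False,True,True)) v"
  apply (rule GM_cases_all[where P="\<lambda>v. pair (phib (Vz,False,True,True)) (sigma_ClV q cc (sigma_VCl q cc v)) = q powi (2 * kap (Vz,False,True,True)) * pair (phib (Vz,False,True,True)) v"])
  by (simp add: power_int_minus_divide pair_GM; (simp add: field_simps)?; (simp only: s_def u_def t_def)?; (algebra)?)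

lemma span_11: "(\<Sum>b\<in>UNIV. sc (phib b (Vz,False,True,True)) (eb b)) = bv (Vz,False,True,True)"
  by (simp add: sum_GM sum_mon bv_GM bv_mon mkcl_zero mkGM_eq_iff mkcl_eq_iff; (simp add: field_simps)?; (simp only: s_def u_def t_def)?; (algebra)?)

lemma s0_11[simp]: "(\<Sum>b\<in>UNIV. sc (phib b (Vz,False,True,True) * q powi (- kap b)) (eb b)) = mkGM (mkcl (0) (0) (0) (0) (0) (0) (0) (0)) (mkcl (0) (0) (0) (((q^8 + 1) / (q^2 * u))) (0) (0) (0) (0)) (mkcl (((- (q^6) - q^4 + q^2 + 1) * cc / (q * u))) (0) (0) (0) (0) (((q^6 + q^4 - q^2 - 1) / (q * u))) (0) (0))"
  by (simp add: sum_GM sum_mon power_int_minus_divide mkGM_eq_iff mkcl_eq_iff; (simp add: field_simps)?; (simp only: s_def u_def t_def)?; (algebra)?)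

lemma eig_12: "sigma_ClV q cc (sigma_VCl q cc (eb (Vz,True,False,False))) = sc (q powi (2 * kap (Vz,True,False,False))) (eb (Vz,True,False,False))"
  by (simp add: power_int_minus_divide mkGM_eq_iff mkcl_eq_iff; (simp add: field_simps)?; (simp only: s_def u_def t_def)?; (algebra)?)

lemma left_12: "pair (phib (Vz,True,False,False)) (sigma_ClV q cc (sigma_VCl q cc v)) = q powi (2 * kap (Vz,True,False,False)) * pair (phib (Vz,True,False,False)) v"
  apply (rule GM_cases_all[where P="\<lambda>v. pair (phib (Vz,True,False,False)) (sigma_ClV q cc (sigma_VCl q cc v)) = q powi (2 * kap (Vz,True,False,False)) * pair (phib (Vz,True,False,False)) v"])
  by (simp add: power_int_minus_divide pair_GM; (simp add: field_simps)?; (simp only: s_def u_def t_def)?; (algebra)?)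

lemma span_12: "(\<Sum>b\<in>UNIV. sc (phib b (Vz,True,False,False)) (eb b)) = bv (Vz,True,False,False)"
  by (simp add: sum_GM sum_mon bv_GM bv_mon mkcl_zero mkGM_eq_iff mkcl_eq_iff; (simp add: field_simps)?; (simp only: s_def u_def t_def)?; (algebra)?)

lemma s0_12[simp]: "(\<Sum>b\<in>UNIV. sc (phib b (Vz,True,False,False) * q powi (- kap b)) (eb b)) = mkGM (mkcl (0) (0) (((- (q^4) + 1) / (u))) (0) (0) (0) (0) (0)) (mkcl (0) (0) (0) (0) (((2*q^2) / (u))) (0) (0) (0)) (mkcl (0) (0) (0) (0) (0) (0) (0) (0))"
  by (simp add: sum_GM sum_mon power_int_minus_divide mkGM_eq_iff mkcl_eq_iff; (simp add: field_simps)?; (simp only: s_def u_def t_def)?; (algebra)?)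

lemma eig_13: "sigma_ClV q cc (sigma_VCl q cc (eb (Vz,True,False,True))) = sc (q powi (2 * kap (Vz,True,False,True))) (eb (Vz,True,False,True))"
  by (simp add: power_int_minus_divide mkGM_eq_iff mkcl_eq_iff; (simp add: field_simps)?; (simp only: s_def u_def t_def)?; (algebra)?)

lemma left_13: "pair (phib (Vz,True,False,True)) (sigma_ClV q cc (sigma_VCl q cc v)) = q powi (2 * kap (Vz,True,False,True)) * pair (phib (Vz,True,False,True)) v"
  apply (rule GM_cases_all[where P="\<lambda>v. pair (phib (Vz,True,False,True)) (sigma_ClV q cc (sigma_VCl q cc v)) = q powi (2 * kap (Vz,True,False,True)) * pair (phib (Vz,True,False,True)) v"])
  by (simp add: power_int_minus_divide pair_GM; (simp add: field_simps)?; (simp only: s_def u_def t_def)?; (algebra)?)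

lemma span_13: "(\<Sum>b\<in>UNIV. sc (phib b (Vz,True,False,True)) (eb b)) = bv (Vz,True,False,True)"
  by (simp add: sum_GM sum_mon bv_GM bv_mon mkcl_zero mkGM_eq_iff mkcl_eq_iff; (simp add: field_simps)?; (simp only: s_def u_def t_def)?; (algebra)?)

lemma s0_13[simp]: "(\<Sum>b\<in>UNIV. sc (phib b (Vz,True,False,True) * q powi (- kap b)) (eb b)) = mkGM (mkcl (0) (0) (0) (((- (q^8) + 2*q^6 - 2*q^4 + 1) / (q^2 * u))) (0) (0) (0) (0)) (mkcl (((- (2*q^6) + 4*q^4 - 2*q^2) * cc / (u))) (0) (0) (0) (0) (((2*q^6 - 3*q^4 + 2*q^2 + 1) / (u))) (0) (0)) (mkcl (0) (0) (0) (0) (0) (0) (((- (2*q^4) + 2*q^2) / (u))) (0))"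
  by (simp add: sum_GM sum_mon power_int_minus_divide mkGM_eq_iff mkcl_eq_iff; (simp add: field_simps)?; (simp only: s_def u_def t_def)?; (algebra)?)

lemma eig_14: "sigma_ClV q cc (sigma_VCl q cc (eb (Vz,True,True,False))) = sc (q powi (2 * kap (Vz,True,True,False))) (eb (Vz,True,True,False))"
  by (simp add: power_int_minus_divide mkGM_eq_iff mkcl_eq_iff; (simp add: field_simps)?; (simp only: s_def u_def t_def)?; (algebra)?)

lemma left_14: "pair (phib (Vz,True,True,False)) (sigma_ClV q cc (sigma_VCl q cc v)) = q powi (2 * kap (Vz,True,True,False)) * pair (phib (Vz,True,True,False)) v"
  apply (rule GM_cases_all[where P="\<lambda>v. pair (phib (Vz,True,True,False)) (sigma_ClV q cc (sigma_VCl q cc v)) = q powi (2 * kap (Vz,True,True,False)) * pair (phib (Vz,True,True,False)) v"])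
  by (simp add: power_int_minus_divide pair_GM; (simp add: field_simps)?; (simp only: s_def u_def t_def)?; (algebra)?)

lemma span_14: "(\<Sum>b\<in>UNIV. sc (phib b (Vz,True,True,False)) (eb b)) = bv (Vz,True,True,False)"
  by (simp add: sum_GM sum_mon bv_GM bv_mon mkcl_zero mkGM_eq_iff mkcl_eq_iff; (simp add: field_simps)?; (simp only: s_def u_def t_def)?; (algebra)?)

lemma s0_14[simp]: "(\<Sum>b\<in>UNIV. sc (phib b (Vz,True,True,False) * q powi (- kap b)) (eb b)) = mkGM (mkcl (((- (q^6) - q^4 + q^2 + 1) * cc / (q * u))) (0) (0) (0) (0) (((q^6 + q^4 - q^2 - 1) / (q * u))) (0) (0)) (mkcl (0) (0) (0) (0) (0) (0) (((2*q^2) / (u))) (0)) (mkcl (0) (0) (0) (0) (0) (0) (0) (0))"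
  by (simp add: sum_GM sum_mon power_int_minus_divide mkGM_eq_iff mkcl_eq_iff; (simp add: field_simps)?; (simp only: s_def u_def t_def)?; (algebra)?)

lemma eig_15: "sigma_ClV q cc (sigma_VCl q cc (eb (Vz,True,True,True))) = sc (q powi (2 * kap (Vz,True,True,True))) (eb (Vz,True,True,True))"
  by (simp add: power_int_minus_divide mkGM_eq_iff mkcl_eq_iff; (simp add: field_simps)?; (simp only: s_def u_def t_def)?; (algebra)?)

lemma left_15: "pair (phib (Vz,True,True,True)) (sigma_ClV q cc (sigma_VCl q cc v)) = q powi (2 * kap (Vz,True,True,True)) * pair (phib (Vz,True,True,True)) v"
  apply (rule GM_cases_all[where P="\<lambda>v. pair (phib (Vz,True,True,True)) (sigma_ClV q cc (sigma_VCl q cc v)) = q powi (2 * kap (Vz,True,True,True)) * pair (phib (Vz,True,True,True)) v"])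
  by (simp add: power_int_minus_divide pair_GM; (simp add: field_simps)?; (simp only: s_def u_def t_def)?; (algebra)?)

lemma span_15: "(\<Sum>b\<in>UNIV. sc (phib b (Vz,True,True,True)) (eb b)) = bv (Vz,True,True,True)"
  by (simp add: sum_GM sum_mon bv_GM bv_mon mkcl_zero mkGM_eq_iff mkcl_eq_iff; (simp add: field_simps)?; (simp only: s_def u_def t_def)?; (algebra)?)

lemma s0_15[simp]: "(\<Sum>b\<in>UNIV. sc (phib b (Vz,True,True,True) * q powi (- kap b)) (eb b)) = mkGM (mkcl (0) (((- (q^10) + q^8 - 2*q^4 + q^2 + 1) * cc / (q^3 * u))) (0) (0) (0) (0) (0) (0)) (mkcl (0) (0) (((- (2*q^6) + 4*q^4 - 2*q^2) * cc / (u))) (0) (0) (0) (0) (((1)))) (mkcl (0) (0) (0) (0) (((- (2*q^5) + 2*q) * cc / (u))) (0) (0) (0))"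
  by (simp add: sum_GM sum_mon power_int_minus_divide mkGM_eq_iff mkcl_eq_iff; (simp add: field_simps)?; (simp only: s_def u_def t_def)?; (algebra)?)

lemma eig_16: "sigma_ClV q cc (sigma_VCl q cc (eb (Vm,False,False,False))) = sc (q powi (2 * kap (Vm,False,False,False))) (eb (Vm,False,False,False))"
  by (simp add: power_int_minus_divide mkGM_eq_iff mkcl_eq_iff; (simp add: field_simps)?; (simp only: s_def u_def t_def)?; (algebra)?)

lemma left_16: "pair (phib (Vm,False,False,False)) (sigma_ClV q cc (sigma_VCl q cc v)) = q powi (2 * kap (Vm,False,False,False)) * pair (phib (Vm,False,False,False)) v"
  apply (rule GM_cases_all[where P="\<lambda>v. pair (phib (Vm,False,False,False)) (sigma_ClV q cc (sigma_VCl q cc v)) = q powi (2 * kap (Vm,False,False,False)) * pair (phib (Vm,False,False,False)) v"])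
  by (simp add: power_int_minus_divide pair_GM; (simp add: field_simps)?; (simp only: s_def u_def t_def)?; (algebra)?)

lemma span_16: "(\<Sum>b\<in>UNIV. sc (phib b (Vm,False,False,False)) (eb b)) = bv (Vm,False,False,False)"
  by (simp add: sum_GM sum_mon bv_GM bv_mon mkcl_zero mkGM_eq_iff mkcl_eq_iff; (simp add: field_simps)?; (simp only: s_def u_def t_def)?; (algebra)?)

lemma s0_16[simp]: "(\<Sum>b\<in>UNIV. sc (phib b (Vm,False,False,False) * q powi (- kap b)) (eb b)) = mkGM (mkcl (0) (0) (0) (0) (0) (0) (0) (0)) (mkcl (0) (0) (0) (0) (0) (0) (0) (0)) (mkcl (((1))) (0) (0) (0) (0) (0) (0) (0))"
  by (simp add: sum_GM sum_mon power_int_minus_divide mkGM_eq_iff mkcl_eq_iff; (simp add: field_simps)?; (simp only: s_def u_def t_def)?; (algebra)?)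

lemma eig_17: "sigma_ClV q cc (sigma_VCl q cc (eb (Vm,False,False,True))) = sc (q powi (2 * kap (Vm,False,False,True))) (eb (Vm,False,False,True))"
  by (simp add: power_int_minus_divide mkGM_eq_iff mkcl_eq_iff; (simp add: field_simps)?; (simp only: s_def u_def t_def)?; (algebra)?)

lemma left_17: "pair (phib (Vm,False,False,True)) (sigma_ClV q cc (sigma_VCl q cc v)) = q powi (2 * kap (Vm,False,False,True)) * pair (phib (Vm,False,False,True)) v"
  apply (rule GM_cases_all[where P="\<lambda>v. pair (phib (Vm,False,False,True)) (sigma_ClV q cc (sigma_VCl q cc v)) = q powi (2 * kap (Vm,False,False,True)) * pair (phib (Vm,False,False,True)) v"])
  by (simp add: power_int_minus_divide pair_GM; (simp add: field_simps)?; (simp only: s_def u_def t_def)?; (algebra)?)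

lemma span_17: "(\<Sum>b\<in>UNIV. sc (phib b (Vm,False,False,True)) (eb b)) = bv (Vm,False,False,True)"
  by (simp add: sum_GM sum_mon bv_GM bv_mon mkcl_zero mkGM_eq_iff mkcl_eq_iff; (simp add: field_simps)?; (simp only: s_def u_def t_def)?; (algebra)?)

lemma s0_17[simp]: "(\<Sum>b\<in>UNIV. sc (phib b (Vm,False,False,True) * q powi (- kap b)) (eb b)) = mkGM (mkcl (0) (0) (0) (0) (0) (0) (0) (0)) (mkcl (0) (0) (0) (0) (0) (0) (0) (0)) (mkcl (0) (((1) / (q^2))) (0) (0) (0) (0) (0) (0))"
  by (simp add: sum_GM sum_mon power_int_minus_divide mkGM_eq_iff mkcl_eq_iff; (simp add: field_simps)?; (simp only: s_def u_def t_def)?; (algebra)?)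

lemma eig_18: "sigma_ClV q cc (sigma_VCl q cc (eb (Vm,False,True,False))) = sc (q powi (2 * kap (Vm,False,True,False))) (eb (Vm,False,True,False))"
  by (simp add: power_int_minus_divide mkGM_eq_iff mkcl_eq_iff; (simp add: field_simps)?; (simp only: s_def u_def t_def)?; (algebra)?)

lemma left_18: "pair (phib (Vm,False,True,False)) (sigma_ClV q cc (sigma_VCl q cc v)) = q powi (2 * kap (Vm,False,True,False)) * pair (phib (Vm,False,True,False)) v"
  apply (rule GM_cases_all[where P="\<lambda>v. pair (phib (Vm,False,True,False)) (sigma_ClV q cc (sigma_VCl q cc v)) = q powi (2 * kap (Vm,False,True,False)) * pair (phib (Vm,False,True,False)) v"])
  by (simp add: power_int_minus_divide pair_GM; (simp add: field_simps)?; (simp only: s_def u_def t_def)?; (algebra)?)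

lemma span_18: "(\<Sum>b\<in>UNIV. sc (phib b (Vm,False,True,False)) (eb b)) = bv (Vm,False,True,False)"
  by (simp add: sum_GM sum_mon bv_GM bv_mon mkcl_zero mkGM_eq_iff mkcl_eq_iff; (simp add: field_simps)?; (simp only: s_def u_def t_def)?; (algebra)?)

lemma s0_18[simp]: "(\<Sum>b\<in>UNIV. sc (phib b (Vm,False,True,False) * q powi (- kap b)) (eb b)) = mkGM (mkcl (0) (0) (0) (0) (0) (0) (0) (0)) (mkcl (0) (((- (q^4) + 1) / (u))) (0) (0) (0) (0) (0) (0)) (mkcl (0) (0) (((2*q^2) / (u))) (0) (0) (0) (0) (0))"
  by (simp add: sum_GM sum_mon power_int_minus_divide mkGM_eq_iff mkcl_eq_iff; (simp add: field_simps)?; (simp only: s_def u_def t_def)?; (algebra)?)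

lemma eig_19: "sigma_ClV q cc (sigma_VCl q cc (eb (Vm,False,True,True))) = sc (q powi (2 * kap (Vm,False,True,True))) (eb (Vm,False,True,True))"
  by (simp add: power_int_minus_divide mkGM_eq_iff mkcl_eq_iff; (simp add: field_simps)?; (simp only: s_def u_def t_def)?; (algebra)?)

lemma left_19: "pair (phib (Vm,False,True,True)) (sigma_ClV q cc (sigma_VCl q cc v)) = q powi (2 * kap (Vm,False,True,True)) * pair (phib (Vm,False,True,True)) v"
  apply (rule GM_cases_all[where P="\<lambda>v. pair (phib (Vm,False,True,True)) (sigma_ClV q cc (sigma_VCl q cc v)) = q powi (2 * kap (Vm,False,True,True)) * pair (phib (Vm,False,True,True)) v"])
  by (simp add: power_int_minus_divide pair_GM; (simp add: field_simps)?; (simp only: s_def u_def t_def)?; (algebra)?)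

lemma span_19: "(\<Sum>b\<in>UNIV. sc (phib b (Vm,False,True,True)) (eb b)) = bv (Vm,False,True,True)"
  by (simp add: sum_GM sum_mon bv_GM bv_mon mkcl_zero mkGM_eq_iff mkcl_eq_iff; (simp add: field_simps)?; (simp only: s_def u_def t_def)?; (algebra)?)

lemma s0_19[simp]: "(\<Sum>b\<in>UNIV. sc (phib b (Vm,False,True,True) * q powi (- kap b)) (eb b)) = mkGM (mkcl (0) (0) (0) (0) (0) (0) (0) (0)) (mkcl (0) (0) (0) (0) (0) (0) (0) (0)) (mkcl (0) (0) (0) (((1) / (q^2))) (0) (0) (0) (0))"
  by (simp add: sum_GM sum_mon power_int_minus_divide mkGM_eq_iff mkcl_eq_iff; (simp add: field_simps)?; (simp only: s_def u_def t_def)?; (algebra)?)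

lemma eig_20: "sigma_ClV q cc (sigma_VCl q cc (eb (Vm,True,False,False))) = sc (q powi (2 * kap (Vm,True,False,False))) (eb (Vm,True,False,False))"
  by (simp add: power_int_minus_divide mkGM_eq_iff mkcl_eq_iff; (simp add: field_simps)?; (simp only: s_def u_def t_def)?; (algebra)?)

lemma left_20: "pair (phib (Vm,True,False,False)) (sigma_ClV q cc (sigma_VCl q cc v)) = q powi (2 * kap (Vm,True,False,False)) * pair (phib (Vm,True,False,False)) v"
  apply (rule GM_cases_all[where P="\<lambda>v. pair (phib (Vm,True,False,False)) (sigma_ClV q cc (sigma_VCl q cc v)) = q powi (2 * kap (Vm,True,False,False)) * pair (phib (Vm,True,False,False)) v"])
  by (simp add: power_int_minus_divide pair_GM; (simp add: field_simps)?; (simp only: s_def u_def t_def)?; (algebra)?)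

lemma span_20: "(\<Sum>b\<in>UNIV. sc (phib b (Vm,True,False,False)) (eb b)) = bv (Vm,True,False,False)"
  by (simp add: sum_GM sum_mon bv_GM bv_mon mkcl_zero mkGM_eq_iff mkcl_eq_iff; (simp add: field_simps)?; (simp only: s_def u_def t_def)?; (algebra)?)

lemma s0_20[simp]: "(\<Sum>b\<in>UNIV. sc (phib b (Vm,True,False,False) * q powi (- kap b)) (eb b)) = mkGM (mkcl (0) (((q^6 - 2*q^4 + q^2) / (u))) (0) (0) (0) (0) (0) (0)) (mkcl (0) (0) (((2*q^7 - 2*q^5) / (u * s))) (0) (0) (0) (0) (0)) (mkcl (0) (0) (0) (0) (((2*q^4) / (u))) (0) (0) (0))"
  by (simp add: sum_GM sum_mon power_int_minus_divide mkGM_eq_iff mkcl_eq_iff; (simp add: field_simps)?; (simp only: s_def u_def t_def)?; (algebra)?)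

lemma eig_21: "sigma_ClV q cc (sigma_VCl q cc (eb (Vm,True,False,True))) = sc (q powi (2 * kap (Vm,True,False,True))) (eb (Vm,True,False,True))"
  by (simp add: power_int_minus_divide mkGM_eq_iff mkcl_eq_iff; (simp add: field_simps)?; (simp only: s_def u_def t_def)?; (algebra)?)

lemma left_21: "pair (phib (Vm,True,False,True)) (sigma_ClV q cc (sigma_VCl q cc v)) = q powi (2 * kap (Vm,True,False,True)) * pair (phib (Vm,True,False,True)) v"
  apply (rule GM_cases_all[where P="\<lambda>v. pair (phib (Vm,True,False,True)) (sigma_ClV q cc (sigma_VCl q cc v)) = q powi (2 * kap (Vm,True,False,True)) * pair (phib (Vm,True,False,True)) v"])
  by (simp add: power_int_minus_divide pair_GM; (simp add: field_simps)?; (simp only: s_def u_def t_def)?; (algebra)?)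

lemma span_21: "(\<Sum>b\<in>UNIV. sc (phib b (Vm,True,False,True)) (eb b)) = bv (Vm,True,False,True)"
  by (simp add: sum_GM sum_mon bv_GM bv_mon mkcl_zero mkGM_eq_iff mkcl_eq_iff; (simp add: field_simps)?; (simp only: s_def u_def t_def)?; (algebra)?)

lemma s0_21[simp]: "(\<Sum>b\<in>UNIV. sc (phib b (Vm,True,False,True) * q powi (- kap b)) (eb b)) = mkGM (mkcl (0) (0) (0) (0) (0) (0) (0) (0)) (mkcl (0) (0) (0) (((q^3 - q) / (u))) (0) (0) (0) (0)) (mkcl (((q^4 - 2*q^2 + 1) * cc / (u))) (0) (0) (0) (0) (((2*q^2) / (u))) (0) (0))"
  by (simp add: sum_GM sum_mon power_int_minus_divide mkGM_eq_iff mkcl_eq_iff; (simp add: field_simps)?; (simp only: s_def u_def t_def)?; (algebra)?)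

lemma eig_22: "sigma_ClV q cc (sigma_VCl q cc (eb (Vm,True,True,False))) = sc (q powi (2 * kap (Vm,True,True,False))) (eb (Vm,True,True,False))"
  by (simp add: power_int_minus_divide mkGM_eq_iff mkcl_eq_iff; (simp add: field_simps)?; (simp only: s_def u_def t_def)?; (algebra)?)

lemma left_22: "pair (phib (Vm,True,True,False)) (sigma_ClV q cc (sigma_VCl q cc v)) = q powi (2 * kap (Vm,True,True,False)) * pair (phib (Vm,True,True,False)) v"
  apply (rule GM_cases_all[where P="\<lambda>v. pair (phib (Vm,True,True,False)) (sigma_ClV q cc (sigma_VCl q cc v)) = q powi (2 * kap (Vm,True,True,False)) * pair (phib (Vm,True,True,False)) v"])
  by (simp add: power_int_minus_divide pair_GM; (simp add: field_simps)?; (simp only: s_def u_def t_def)?; (algebra)?)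

lemma span_22: "(\<Sum>b\<in>UNIV. sc (phib b (Vm,True,True,False)) (eb b)) = bv (Vm,True,True,False)"
  by (simp add: sum_GM sum_mon bv_GM bv_mon mkcl_zero mkGM_eq_iff mkcl_eq_iff; (simp add: field_simps)?; (simp only: s_def u_def t_def)?; (algebra)?)

lemma s0_22[simp]: "(\<Sum>b\<in>UNIV. sc (phib b (Vm,True,True,False) * q powi (- kap b)) (eb b)) = mkGM (mkcl (0) (0) (0) (((q^6 - 2*q^4 + q^2) / (u))) (0) (0) (0) (0)) (mkcl (((2*q^6 - 2*q^4) * cc / (u))) (0) (0) (0) (0) (((- (2*q^6) + 2*q^4) / (u))) (0) (0)) (mkcl (0) (0) (0) (0) (0) (0) (((2*q^4) / (u))) (0))"
  by (simp add: sum_GM sum_mon power_int_minus_divide mkGM_eq_iff mkcl_eq_iff; (simp add: field_simps)?; (simp only: s_def u_def t_def)?; (algebra)?)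

lemma eig_23: "sigma_ClV q cc (sigma_VCl q cc (eb (Vm,True,True,True))) = sc (q powi (2 * kap (Vm,True,True,True))) (eb (Vm,True,True,True))"
  by (simp add: power_int_minus_divide mkGM_eq_iff mkcl_eq_iff; (simp add: field_simps)?; (simp only: s_def u_def t_def)?; (algebra)?)

lemma left_23: "pair (phib (Vm,True,True,True)) (sigma_ClV q cc (sigma_VCl q cc v)) = q powi (2 * kap (Vm,True,True,True)) * pair (phib (Vm,True,True,True)) v"
  apply (rule GM_cases_all[where P="\<lambda>v. pair (phib (Vm,True,True,True)) (sigma_ClV q cc (sigma_VCl q cc v)) = q powi (2 * kap (Vm,True,True,True)) * pair (phib (Vm,True,True,True)) v"])
  by (simp add: power_int_minus_divide pair_GM; (simp add: field_simps)?; (simp only: s_def u_def t_def)?; (algebra)?)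

lemma span_23: "(\<Sum>b\<in>UNIV. sc (phib b (Vm,True,True,True)) (eb b)) = bv (Vm,True,True,True)"
  by (simp add: sum_GM sum_mon bv_GM bv_mon mkcl_zero mkGM_eq_iff mkcl_eq_iff; (simp add: field_simps)?; (simp only: s_def u_def t_def)?; (algebra)?)

lemma s0_23[simp]: "(\<Sum>b\<in>UNIV. sc (phib b (Vm,True,True,True) * q powi (- kap b)) (eb b)) = mkGM (mkcl (0) (0) (0) (0) (0) (0) (0) (0)) (mkcl (0) (((q^4 - 1) * cc / (u))) (0) (0) (0) (0) (0) (0)) (mkcl (0) (0) (((q^4 - 2*q^2 + 1) * cc / (u))) (0) (0) (0) (0) (((1))))"
  by (simp add: sum_GM sum_mon power_int_minus_divide mkGM_eq_iff mkcl_eq_iff; (simp add: field_simps)?; (simp only: s_def u_def t_def)?; (algebra)?)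

lemma eig: "(sigma_ClV q cc \<circ> sigma_VCl q cc) (eb b) = sc (q powi (2 * kap b)) (eb b)"
proof -
  obtain g x y z where b: "b = (g,x,y,z)" by (cases b) auto
  show ?thesis unfolding b by (cases g; cases x; cases y; cases z) (simp_all only: eig_0 eig_1 eig_2 eig_3 eig_4 eig_5 eig_6 eig_7 eig_8 eig_9 eig_10 eig_11 eig_12 eig_13 eig_14 eig_15 eig_16 eig_17 eig_18 eig_19 eig_20 eig_21 eig_22 eig_23 o_apply)
qed

lemma left: "pair (phib b) ((sigma_ClV q cc \<circ> sigma_VCl q cc) v) = q powi (2 * kap b) * pair (phib b) v"
proof -
  obtain g x y z where b: "b = (g,x,y,z)" by (cases b) auto
  show ?thesis unfolding b by (cases g; cases x; cases y; cases z) (simp_all only: left_0 left_1 left_2 left_3 left_4 left_5 left_6 left_7 left_8 left_9 left_10 left_11 left_12 left_13 left_14 left_15 left_16 left_17 left_18 left_19 left_20 left_21 left_22 left_23 o_apply)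
qed

lemma span: "(\<Sum>b\<in>UNIV. sc (phib b i) (eb b)) = bv i"
proof -
  obtain g x y z where b: "i = (g,x,y,z)" by (cases i) auto
  show ?thesis unfolding b by (cases g; cases x; cases y; cases z) (simp_all only: span_0 span_1 span_2 span_3 span_4 span_5 span_6 span_7 span_8 span_9 span_10 span_11 span_12 span_13 span_14 span_15 span_16 span_17 span_18 span_19 span_20 span_21 span_22 span_23)
qed

lemma nsig: "inv_sqrt q (sigma_ClV q cc \<circ> sigma_VCl q cc) = linext (\<lambda>i. \<Sum>b\<in>UNIV. sc (phib b i * q powi (- kap b)) (eb b))"
  by (rule inv_sqrt_eq[OF inj_q eig left span])

definition S0op where "S0op = linext (\<lambda>i. \<Sum>b\<in>UNIV. sc (phib b i * q powi (- kap b)) (eb b))"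

lemma S0_mat[simp]: "S0op (mkGM (mkcl a0 a1 a2 a3 a4 a5 a6 a7) (mkcl b0 b1 b2 b3 b4 b5 b6 b7) (mkcl c0 c1 c2 c3 c4 c5 c6 c7)) = mkGM (mkcl (a0 * (((1))) + a5 * (((- (q^8) + q^6 + q^2 - 1) * cc / (q^2 * u))) + b6 * (((- (q^6) - q^4 + q^2 + 1) * cc / (q * u)))) (a1 * (((q^10 - q^8 + 2*q^6 - q^2 + 1) / (q^2 * u))) + b2 * (((q^10 - q^8 + 2*q^4 - q^2 - 1) / (q^3 * u))) + b7 * (((- (q^10) + q^8 - 2*q^4 + q^2 + 1) * cc / (q^3 * u))) + c4 * (((q^6 - 2*q^4 + q^2) / (u)))) (a2 * (((q^8 + 1) / (q^2 * u))) + a7 * (((- (q^8) + q^6 + q^2 - 1) * cc / (q^2 * u))) + b4 * (((- (q^4) + 1) / (u)))) (a3 * (((q^10 - q^8 + 2*q^6 - q^2 + 1) / (q^2 * u))) + b5 * (((- (q^8) + 2*q^6 - 2*q^4 + 1) / (q^2 * u))) + c6 * (((q^6 - 2*q^4 + q^2) / (u)))) (a4 * (((1) / (q^2)))) (a5 * (((q^8 + 1) / (q^2 * u))) + b6 * (((q^6 + q^4 - q^2 - 1) / (q * u)))) (a6 * (((1) / (q^2)))) (a7 * (((1))))) (mkcl (a3 * (((q^8 - 2*q^6 + 2*q^4 - 1) * cc / (u))) + b0 * (((1))) + b5 * (((- (2*q^6) + 4*q^4 - 2*q^2) * cc / (u))) + c6 * (((2*q^6 - 2*q^4) * cc / (u))))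 (b1 * (((q^8 + 1) / (q^2 * u))) + c2 * (((- (q^4) + 1) / (u))) + c7 * (((q^4 - 1) * cc / (u)))) (a1 * (((q^9 - 2*q^7 + 2*q^5 - q) / (u * s))) + b2 * (((2*q^6 - 3*q^4 + 2*q^2 + 1) / (u))) + b7 * (((- (2*q^6) + 4*q^4 - 2*q^2) * cc / (u))) + c4 * (((2*q^7 - 2*q^5) / (u * s)))) (b3 * (((q^8 + 1) / (q^2 * u))) + c5 * (((q^3 - q) / (u)))) (a2 * (((- (q^4) + 1) / (u))) + a7 * (((q^4 - 1) * cc / (u))) + b4 * (((2*q^2) / (u)))) (a3 * (((- (q^8) + 2*q^6 - 2*q^4 + 1) / (u))) + b5 * (((2*q^6 - 3*q^4 + 2*q^2 + 1) / (u))) + c6 * (((- (2*q^6) + 2*q^4) / (u)))) (a5 * (((q^3 - q) / (u))) + b6 * (((2*q^2) / (u)))) (b7 * (((1))))) (mkcl (b3 * (((- (q^6) - q^4 + q^2 + 1) * cc / (q * u))) + c0 * (((1))) + c5 * (((q^4 - 2*q^2 + 1) * cc / (u)))) (c1 * (((1) / (q^2)))) (b1 * (((- (q^4) + 1) / (u))) + c2 * (((2*q^2) / (u))) + c7 * (((q^4 - 2*q^2 + 1) * cc / (u)))) (c3 * (((1) / (q^2)))) (a1 * (((q^6 - 2*q^4 + q^2) / (u))) + b2 * (((2*q^5 - 2*q) / (u))) + b7 * (((- (2*q^5) + 2*q) * cc / (u))) + c4 * (((2*q^4) / (u)))) (b3 * (((q^6 + q^4 - q^2 - 1) / (q * u)))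 + c5 * (((2*q^2) / (u)))) (a3 * (((q^6 - 2*q^4 + q^2) / (u))) + b5 * (((- (2*q^4) + 2*q^2) / (u))) + c6 * (((2*q^4) / (u)))) (c7 * (((1)))))"
  unfolding S0op_def linext_mkGM linext_mkcl
  by (simp add: mkGM_eq_iff mkcl_eq_iff; (simp add: field_simps)?; (simp only: s_def u_def t_def)?; (algebra)?)

lemma nsigma_eq: "nsigma_VCl q cc v = sigma_VCl q cc (S0op v)"
  by (simp add: nsigma_VCl_def nsig S0op_def)

end


lemma CL_cases_all: assumes "\<And>a0 a1 a2 a3 a4 a5 a6 a7. P (mkcl a0 a1 a2 a3 a4 a5 a6 a7)" shows "P v"
  by (subst cl_eta) (rule assms)
lemma G_cases_all: assumes "\<And>x0 x1 x2. P (mkG x0 x1 x2)" shows "P v"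
  by (subst gen_eta) (rule assms)

lemma multClV_mkMG: "mult_ClV q cc (mkMG A B C) = mult q cc A (gen_cl Vp) + mult q cc B (gen_cl Vz) + mult q cc C (gen_cl Vm)"
  unfolding mult_ClV_def linext_mkMG by (simp add: mult_def linext_bv)

context qc2 begin
lemma iota_mat[simp]: "iota q cc (mkG x0 x1 x2) (mkcl a0 a1 a2 a3 a4 a5 a6 a7) = mkcl (x0 * a1 * (((1) * cc)) + x1 * a2 * (((q^2 + 1) * cc / (q^3))) + x1 * a7 * (((q^4 - 1) * cc^2 / (q^3))) + x2 * a4 * (((1) * cc / (q^2)))) (x1 * a3 * (((q^2 + 1) * cc / (q))) + x2 * a5 * (((1) * cc / (q^2)))) (x0 * a3 * (((- (1)) * cc)) + x1 * a5 * (((- (q^2) + 1) * cc / (q^2))) + x2 * a6 * (((1) * cc))) (x2 * a7 * (((1) * cc))) (x0 * a5 * (((- (1)) * cc)) + x1 * a6 * (((- (q^2) - 1) * cc / (q^3)))) (x1 * a7 * (((- (q^2) - 1) * cc / (q)))) (x0 * a7 * (((1) * cc))) (0)"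
  unfolding iota_def nsigma_eq
  by (simp add: word_def wprod_def lmul_def mult_def emb_def gen_cl_def bv_mon bv_gen mkcl_zero mkG_zero linext_mkcl linext_mkG linext_mkMG one_cl_def power_int_minus_divide tens_mkG even_mkcl odd_mkcl multClV_mkMG mkcl_eq_iff; (simp add: field_simps)?; (simp only: s_def u_def t_def)?; (algebra)?)

lemma Lie_gen[simp]: "Lie q cc (mkG x0 x1 x2) (mkcl a0 a1 a2 a3 a4 a5 a6 a7) = mkcl (x0 * a3 * (((q^2 + 1) * cc / (q))) + x1 * a5 * (((q^4 - 1) * cc / (q^3))) + x2 * a6 * (((- (q^2) - 1) * cc / (q)))) (x1 * a1 * (((- (q^2) - 1) / (q))) + x2 * a2 * (((q^2 + 1) / (q^3))) + x2 * a7 * (((- (q^2) - 1) * cc / (q^3)))) (x0 * a1 * (((1))) + x1 * a2 * (((- (q^4) + 1) / (q^3))) + x1 * a7 * (((q^4 - 1) * cc / (q^3))) + x2 * a4 * (((- (1))))) (x1 * a3 * (((- (q^2) - 1) / (q))) + x2 * a5 * (((- (1)) / (q^2)))) (x0 * a2 * (((- (q^2) - 1) / (q))) + x0 * a7 * (((q^2 + 1) * cc / (q))) + x1 * a4 * (((q^2 + 1) / (q^3)))) (x0 * a3 * (((- (q^2) - 1) / (q))) + x1 * a5 * (((- (q^4) + 1) / (q^3))) + x2 * a6 * (((q^2 + 1) / (q)))) (x0 * a5 * (((1))) + x1 * a6 * (((q^2 + 1) / (q^3)))) (0)"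
  unfolding Lie_def
  by (simp add: mkcl_eq_iff; (simp add: field_simps)?; (simp only: s_def u_def t_def)?; (algebra)?)

lemma main_gen: "Lie q cc (mkG x0 x1 x2) (mkcl a0 a1 a2 a3 a4 a5 a6 a7) = iota q cc (mkG x0 x1 x2) (dCl q cc (mkcl a0 a1 a2 a3 a4 a5 a6 a7)) + dCl q cc (iota q cc (mkG x0 x1 x2) (mkcl a0 a1 a2 a3 a4 a5 a6 a7))"
  by (simp add: mkcl_eq_iff del: Lie_mat_Vp Lie_mat_Vz Lie_mat_Vm; (simp add: field_simps)?; (simp only: s_def u_def t_def)?; (algebra)?)

lemma dd_gen: "dCl q cc (dCl q cc (mkcl a0 a1 a2 a3 a4 a5 a6 a7)) = 0"
  by (simp add: mkcl_eq_iff mkcl_zero; (simp add: field_simps)?; (simp only: s_def u_def t_def)?; (algebra)?)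

lemma iota0_gen: "iota q cc (mkG x0 x1 x2) 0 = 0"
  by (simp add: mkcl_zero)

lemma dadd_gen: "dCl q cc ((mkcl a0 a1 a2 a3 a4 a5 a6 a7) + (mkcl b0 b1 b2 b3 b4 b5 b6 b7)) = dCl q cc (mkcl a0 a1 a2 a3 a4 a5 a6 a7) + dCl q cc (mkcl b0 b1 b2 b3 b4 b5 b6 b7)"
  by (simp add: mkcl_eq_iff; (simp add: field_simps)?; (simp only: s_def u_def t_def)?; (algebra)?)

lemma main_all: "Lie q cc x w = iota q cc x (dCl q cc w) + dCl q cc (iota q cc x w)"
  by (rule G_cases_all[where v=x], rule CL_cases_all[where v=w], rule main_gen)
lemma dd: "dCl q cc (dCl q cc w) = 0"
  by (rule CL_cases_all[where v=w], rule dd_gen)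
lemma iota0: "iota q cc x 0 = 0"
  by (rule G_cases_all[where v=x], rule iota0_gen)
lemma dadd: "dCl q cc (v + w) = dCl q cc v + dCl q cc w"
  by (rule CL_cases_all[where v=v], rule CL_cases_all[where v=w], rule dadd_gen)
lemma final:
  "(\<forall>x w. Lie q cc x w = iota q cc x (dCl q cc w) + dCl q cc (iota q cc x w))
       \<and> (\<forall>x w. dCl q cc (Lie q cc x w) = Lie q cc x (dCl q cc w))
       \<and> (\<forall>x w. dCl q cc w = 0 \<longrightarrow> Lie q cc x w = dCl q cc (iota q cc x w))"
proof -
  have c2: "dCl q cc (Lie q cc x w) = Lie q cc x (dCl q cc w)" for x w
    by (simp only: main_all[of x w] main_all[of x "dCl q cc w"] dadd dd iota0) simp
  have c3: "dCl q cc w = 0 \<Longrightarrow> Lie q cc x w = dCl q cc (iota q cc x w)" for x w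
    using main_all[of x w] iota0[of x] by simp
  show ?thesis using main_all c2 c3 by blast
qed

end


theorem mainTheorem5:
  fixes q cc :: complex
  assumes "q \<noteq> 0"
    and "\<forall>n::nat. n > 0 \<longrightarrow> q ^ n \<noteq> 1"
    and "cc \<noteq> 0"
  shows "(\<forall>x w. Lie q cc x w = iota q cc x (dCl q cc w) + dCl q cc (iota q cc x w))
       \<and> (\<forall>x w. dCl q cc (Lie q cc x w) = Lie q cc x (dCl q cc w))
       \<and> (\<forall>x w. dCl q cc w = 0 \<longrightarrow> Lie q cc x w = dCl q cc (iota q cc x w))"
proof -
  have qp: "q^2 + 1 \<noteq> 0"
  proof
    assume h: "q^2 + 1 = 0"
    have h2: "q^2 = -1" using h by algebra
    have "q^4 = (q^2)^2" by simp
    also have "\<dots> = 1" using h2 by simp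
    finally show False using assms(2) by (metis zero_less_numeral)
  qed
  have qm: "q^2 - 1 \<noteq> 0"
  proof
    assume "q^2 - 1 = 0"
    then have "q^2 = 1" by simp
    then show False using assms(2) by (metis zero_less_numeral)
  qed
  interpret qc2 q cc "q^2 + 1" "q^4 + 1" "q^4 + q^2 + 1"
    by unfold_locales (simp_all add: assms qp qm)
  show ?thesis by (rule final)
qed

end
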